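(* Let $\Omega$ be a verification operator for $|\Psi\rangle$ with second largest eigenvalue $\beta$ and spectral gap $\nu=1-\beta$, let $N\ge1$ be an integer, $0<\delta\le1$, and assume $0<\nu\le1$. Then $$F(N,\delta,\Omega)\ge 1-\frac{1-\delta}{N\nu\delta},$$ and this inequality is saturated when $\delta^*\le\delta\le1$, where $\delta^*=\frac{1+N\beta}{N+1}$. If in addition $\nu\ge1/2$, then $$F(N,\delta,\Omega)\ge1-\frac{1}{(N+1)\delta},$$ and this inequality is saturated when $\Omega$ is singular (i.e. has eigenvalue $0$) and $1/(N+1)\le\delta\le\delta^*$.
   Context: Let $\mathcal H$ be a Hilbert space of finite dimension $D\ge2$ and $|\Psi\rangle\in\mathcal H$ a unit vector. A verification operator for $|\Psi\rangle$ is a Hermitian operator $\Omega$ on $\mathcal H$ with $0\le\Omega\le1$, $\Omega|\Psi\rangle=|\Psi\rangle$, whose eigenvalue $1$ is nondegenerate; $\beta$ denotes its second largest eigenvalue. For an integer $N\ge1$ and a density operator $\rho$ on $\mathcal H^{\otimes(N+1)}$ put $p_\rho=\mathrm{tr}[(\Omega^{\otimes N}\otimes 1)\rho]$ and $f_\rho=\mathrm{tr}[(\Omega^{\otimes N}\otimes|\Psi\rangle\langle\Psi|)\rho]$, and $F(N,\delta,\Omega)=\min\{f_\rho/p_\rho:p_\rho\ge\delta\}$ for $0<\delta\le1$, the minimum over permutation-invariant density operators on $\mathcal H^{\otimes(N+1)}$. *)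

theory Defs
  imports "HOL-Analysis.Analysis" "HOL-Combinatorics.Permutations"
begin

text \<open>Hilbert space H = functions 'a => complex, 'a a finite basis type (D = CARD('a)).  The (N+1)-fold tensor power
has orthonormal basis indexed by lists of length N+1 over 'a.\<close>

type_synonym 'b op = "'b \<Rightarrow> 'b \<Rightarrow> complex"

definition mat_vec :: "'b::finite op \<Rightarrow> ('b \<Rightarrow> complex) \<Rightarrow> ('b \<Rightarrow> complex)" where
  "mat_vec A v = (\<lambda>i. \<Sum>j\<in>UNIV. A i j * v j)"

definition unit_vec :: "('b::finite \<Rightarrow> complex) \<Rightarrow> bool" where
  "unit_vec v \<longleftrightarrow> (\<Sum>i\<in>UNIV. (cmod (v i))\<^sup>2) = 1"

definition psd_on :: "'b set \<Rightarrow> 'b op \<Rightarrow> bool" where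
  "psd_on I A \<longleftrightarrow> (\<forall>i\<in>I. \<forall>j\<in>I. A j i = cnj (A i j)) \<and>
     (\<forall>v. 0 \<le> Re (\<Sum>i\<in>I. \<Sum>j\<in>I. cnj (v i) * A i j * v j))"

definition id_op :: "'b op" where
  "id_op = (\<lambda>i j. if i = j then 1 else 0)"

definition proj_op :: "('b \<Rightarrow> complex) \<Rightarrow> 'b op" where
  "proj_op v = (\<lambda>i j. v i * cnj (v j))"

definition is_eigenvalue :: "'b::finite op \<Rightarrow> complex \<Rightarrow> bool" where
  "is_eigenvalue A l \<longleftrightarrow> (\<exists>v. v \<noteq> (\<lambda>_. 0) \<and> mat_vec A v = (\<lambda>i. l * v i))"

definition verification_op :: "'b::finite op \<Rightarrow> ('b \<Rightarrow> complex) \<Rightarrow> bool" where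
  "verification_op Om psi \<longleftrightarrow>
     psd_on UNIV Om \<and> psd_on UNIV (\<lambda>i j. id_op i j - Om i j) \<and>
     mat_vec Om psi = psi \<and>
     (\<forall>v. mat_vec Om v = v \<longrightarrow> (\<exists>c. v = (\<lambda>i. c * psi i)))"

definition second_largest_eigenvalue :: "'b::finite op \<Rightarrow> real \<Rightarrow> bool" where
  "second_largest_eigenvalue Om b \<longleftrightarrow>
     b \<noteq> 1 \<and> is_eigenvalue Om (complex_of_real b) \<and>
     (\<forall>m::real. is_eigenvalue Om (complex_of_real m) \<and> m \<noteq> 1 \<longrightarrow> m \<le> b)"

definition idx :: "nat \<Rightarrow> 'b list set" where
  "idx n = {xs. length xs = n}"

definition tensor_ops :: "'b op list \<Rightarrow> 'b list op" where
  "tensor_ops As = (\<lambda>xs ys. \<Prod>k<length As. (As ! k) (xs ! k) (ys ! k))"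

definition density_op :: "nat \<Rightarrow> 'b list op \<Rightarrow> bool" where
  "density_op n rho \<longleftrightarrow> psd_on (idx n) rho \<and> (\<Sum>xs\<in>idx n. rho xs xs) = 1"

text \<open>Permutation invariance: P_sigma rho P_sigma^dagger = rho for all permutations sigma
of the n tensor factors.\<close>
definition perm_invariant :: "nat \<Rightarrow> 'b list op \<Rightarrow> bool" where
  "perm_invariant n rho \<longleftrightarrow>
     (\<forall>s. s permutes {..<n} \<longrightarrow>
        (\<forall>xs\<in>idx n. \<forall>ys\<in>idx n. rho (permute_list s xs) (permute_list s ys) = rho xs ys))"

definition tr_prod :: "nat \<Rightarrow> 'b list op \<Rightarrow> 'b list op \<Rightarrow> real" where
  "tr_prod n A rho = Re (\<Sum>xs\<in>idx n. \<Sum>ys\<in>idx n. A xs ys * rho ys xs)"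

definition p_rho :: "nat \<Rightarrow> 'b op \<Rightarrow> 'b list op \<Rightarrow> real" where
  "p_rho N Om rho = tr_prod (N+1) (tensor_ops (replicate N Om @ [id_op])) rho"

definition f_rho :: "nat \<Rightarrow> 'b op \<Rightarrow> ('b \<Rightarrow> complex) \<Rightarrow> 'b list op \<Rightarrow> real" where
  "f_rho N Om psi rho = tr_prod (N+1) (tensor_ops (replicate N Om @ [proj_op psi])) rho"

text \<open>F(N,delta,Omega): the minimum (attained, written as infimum) of f/p over
permutation-invariant density operators with p >= delta.\<close>
definition F_min :: "nat \<Rightarrow> real \<Rightarrow> 'b op \<Rightarrow> ('b \<Rightarrow> complex) \<Rightarrow> real" where
  "F_min N d Om psi = Inf {f_rho N Om psi rho / p_rho N Om rho | rho.
      density_op (N+1) rho \<and> perm_invariant (N+1) rho \<and> p_rho N Om rho \<ge> d}"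

end

theory Submission
  imports Defs
begin


definition ip :: "('b::finite \<Rightarrow> complex) \<Rightarrow> ('b \<Rightarrow> complex) \<Rightarrow> complex" where
  "ip u v = (\<Sum>a\<in>UNIV. cnj (u a) * v a)"

definition herm :: "'b::finite op \<Rightarrow> bool" where
  "herm A \<longleftrightarrow> (\<forall>i j. A j i = cnj (A i j))"

lemma ip_cnj: "ip v u = cnj (ip u v)"
  unfolding ip_def by (simp add: mult.commute)

lemma ip_scale_r: "ip u (\<lambda>a. c * v a) = c * ip u v"
  unfolding ip_def by (simp add: sum_distrib_left algebra_simps)

lemma ip_scale_l: "ip (\<lambda>a. c * u a) v = cnj c * ip u v"
  unfolding ip_def by (simp add: sum_distrib_left algebra_simps)

lemma ip_add_r: "ip u (\<lambda>a. v a + w a) = ip u v + ip u w"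
  unfolding ip_def by (simp add: sum.distrib algebra_simps)

lemma ip_diff_r: "ip u (\<lambda>a. v a - w a) = ip u v - ip u w"
  unfolding ip_def by (simp add: sum_subtractf algebra_simps)

lemma ip_add_l: "ip (\<lambda>a. v a + w a) u = ip v u + ip w u"
  unfolding ip_def by (simp add: sum.distrib algebra_simps)

lemma ip_diff_l: "ip (\<lambda>a. v a - w a) u = ip v u - ip w u"
  unfolding ip_def by (simp add: sum_subtractf algebra_simps)

lemma ip_sum_r: "ip u (\<lambda>a. \<Sum>i\<in>I. f i a) = (\<Sum>i\<in>I. ip u (f i))"
  unfolding ip_def by (simp add: sum_distrib_left) (rule sum.swap)

lemma ip_sum_l: "ip (\<lambda>a. \<Sum>i\<in>I. f i a) u = (\<Sum>i\<in>I. ip (f i) u)"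
  unfolding ip_def by (simp add: sum_distrib_right cnj_sum) (rule sum.swap)

lemma ip_delta_l: "ip (\<lambda>y. if y = x then 1 else 0) v = v x"
proof -
  have eq: "(\<lambda>a. cnj (if a = x then 1 else 0) * v a) = (\<lambda>a. if a = x then v a else 0)" by auto
  show ?thesis unfolding ip_def eq by simp
qed

lemma ip_delta_r: "ip v (\<lambda>y. if y = x then 1 else 0) = cnj (v x)"
proof -
  have eq: "(\<lambda>a. cnj (v a) * (if a = x then 1 else 0)) = (\<lambda>a. if a = x then cnj (v a) else 0)" by auto
  show ?thesis unfolding ip_def eq by simp
qed

lemma ip_self: "ip v v = of_real (\<Sum>a\<in>UNIV. (cmod (v a))\<^sup>2)"
  unfolding ip_def of_real_sum
  by (rule sum.cong, simp, subst complex_norm_square, simp add: mult.commute)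

lemma ip_self_Re: "Re (ip v v) = (\<Sum>a\<in>UNIV. (cmod (v a))\<^sup>2)"
  by (simp add: ip_self)

lemma ip_self_zero: assumes "ip v v = 0" shows "v = (\<lambda>_. 0)"
proof
  fix a
  have "(\<Sum>a\<in>UNIV. (cmod (v a))\<^sup>2) = 0" using assms ip_self_Re[of v] by simp
  then have "(cmod (v a))\<^sup>2 = 0"
    using sum_nonneg_eq_0_iff[of UNIV "\<lambda>a. (cmod (v a))\<^sup>2"] by simp
  then show "v a = 0" by simp
qed

lemma ip_herm: assumes "herm A"
  shows "ip u (mat_vec A v) = ip (mat_vec A u) v"
proof -
  have "ip u (mat_vec A v) = (\<Sum>a\<in>UNIV. \<Sum>b\<in>UNIV. cnj (u a) * A a b * v b)"
    unfolding ip_def mat_vec_def by (simp add: sum_distrib_left mult.assoc)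
  also have "\<dots> = (\<Sum>b\<in>UNIV. \<Sum>a\<in>UNIV. cnj (u a) * A a b * v b)"
    by (rule sum.swap)
  also have "\<dots> = (\<Sum>b\<in>UNIV. \<Sum>a\<in>UNIV. cnj (A b a * u a) * v b)"
  proof (intro sum.cong refl)
    fix a b
    have "A a b = cnj (A b a)" using assms unfolding herm_def by metis
    then show "cnj (u a) * A a b * v b = cnj (A b a * u a) * v b" by simp
  qed
  also have "\<dots> = ip (mat_vec A u) v"
    unfolding ip_def mat_vec_def by (simp add: sum_distrib_right cnj_sum)
  finally show ?thesis .
qed

lemma psd_herm: "psd_on UNIV A \<Longrightarrow> herm A"
  unfolding psd_on_def herm_def by blast

lemma psd_ip: assumes "psd_on UNIV A" shows "0 \<le> Re (ip v (mat_vec A v))"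
proof -
  have "ip v (mat_vec A v) = (\<Sum>i\<in>UNIV. \<Sum>j\<in>UNIV. cnj (v i) * A i j * v j)"
    unfolding ip_def mat_vec_def by (simp add: sum_distrib_left mult.assoc)
  moreover have "0 \<le> Re (\<Sum>i\<in>UNIV. \<Sum>j\<in>UNIV. cnj (v i) * A i j * v j)"
    using assms unfolding psd_on_def by blast
  ultimately show ?thesis by simp
qed

definition orthonormal :: "(nat \<Rightarrow> 'b::finite \<Rightarrow> complex) \<Rightarrow> nat \<Rightarrow> bool" where
  "orthonormal u k \<longleftrightarrow> (\<forall>i<k. \<forall>j<k. ip (u i) (u j) = (if i = j then 1 else 0))"

definition resid :: "(nat \<Rightarrow> 'b::finite \<Rightarrow> complex) \<Rightarrow> nat \<Rightarrow> 'b \<Rightarrow> 'b \<Rightarrow> complex" where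
  "resid u k x = (\<lambda>y. (if y = x then 1 else 0) - (\<Sum>i<k. cnj (u i x) * u i y))"

lemma resid_orth: assumes "orthonormal u k" "j < k"
  shows "ip (u j) (resid u k x) = 0"
proof -
  have "ip (u j) (resid u k x) = cnj (u j x) - (\<Sum>i<k. cnj (u i x) * ip (u j) (u i))"
    unfolding resid_def by (simp add: ip_diff_r ip_sum_r ip_scale_r ip_delta_r)
  also have "(\<Sum>i<k. cnj (u i x) * ip (u j) (u i)) = (\<Sum>i<k. if i = j then cnj (u i x) else 0)"
    using assms unfolding orthonormal_def by (intro sum.cong) auto
  also have "\<dots> = cnj (u j x)" using assms(2) by simp
  finally show ?thesis by simp
qed

lemma resid_self: assumes "orthonormal u k"
  shows "ip (resid u k x) (resid u k x) = 1 - of_real (\<Sum>i<k. (cmod (u i x))\<^sup>2)"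
proof -
  have sq: "(\<Sum>i<k. u i x * cnj (u i x)) = of_real (\<Sum>i<k. (cmod (u i x))\<^sup>2)"
    unfolding of_real_sum
    by (rule sum.cong, simp, subst complex_norm_square, simp)
  have "ip (resid u k x) (resid u k x) = resid u k x x - (\<Sum>i<k. u i x * ip (u i) (resid u k x))"
    unfolding resid_def[of u k x] by (simp add: ip_diff_l ip_sum_l ip_scale_l ip_delta_l resid_def)
  also have "(\<Sum>i<k. u i x * ip (u i) (resid u k x)) = 0"
    using resid_orth[OF assms] by simp
  finally show ?thesis unfolding resid_def using sq by (simp add: mult.commute)
qed


lemma mat_vec_scale: "mat_vec A (\<lambda>a. c * v a) = (\<lambda>a. c * mat_vec A v a)"
  unfolding mat_vec_def by (simp add: sum_distrib_left algebra_simps)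

lemma mat_vec_add: "mat_vec A (\<lambda>a. v a + w a) = (\<lambda>a. mat_vec A v a + mat_vec A w a)"
  unfolding mat_vec_def by (simp add: sum.distrib algebra_simps)

lemma sum_sq_total: assumes "orthonormal u k"
  shows "(\<Sum>x\<in>UNIV. \<Sum>i<k. (cmod (u i x))\<^sup>2) = real k"
proof -
  have "(\<Sum>x\<in>UNIV. \<Sum>i<k. (cmod (u i x))\<^sup>2) = (\<Sum>i<k. \<Sum>x\<in>UNIV. (cmod (u i x))\<^sup>2)"
    by (rule sum.swap)
  also have "\<dots> = (\<Sum>i<k. 1)"
  proof (rule sum.cong[OF refl])
    fix i assume "i \<in> {..<k}"
    then have "ip (u i) (u i) = 1" using assms unfolding orthonormal_def by auto
    then show "(\<Sum>x\<in>UNIV. (cmod (u i x))\<^sup>2) = 1" using ip_self_Re[of "u i"] by simp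
  qed
  finally show ?thesis by simp
qed

lemma resid_Re: assumes "orthonormal u k"
  shows "Re (ip (resid u k x) (resid u k x)) = 1 - (\<Sum>i<k. (cmod (u i x))\<^sup>2)"
  using resid_self[OF assms] by simp

lemma bessel_pt: assumes "orthonormal u k"
  shows "(\<Sum>i<k. (cmod (u i x))\<^sup>2) \<le> 1"
  using resid_Re[OF assms, of x] ip_self_Re[of "resid u k x"] sum_nonneg[of UNIV "\<lambda>a. (cmod (resid u k x a))\<^sup>2"]
  by simp

lemma exists_orth_vec:
  fixes u :: "nat \<Rightarrow> 'b::finite \<Rightarrow> complex"
  assumes "orthonormal u k" "k < CARD('b)"
  shows "\<exists>w. w \<noteq> (\<lambda>_. 0) \<and> (\<forall>i<k. ip (u i) w = 0)"
proof (rule ccontr)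
  assume na: "\<not> ?thesis"
  have "\<forall>x. (\<Sum>i<k. (cmod (u i x))\<^sup>2) = 1"
  proof
    fix x
    have "resid u k x = (\<lambda>_. 0)" using na resid_orth[OF assms(1)] by blast
    then have "Re (ip (resid u k x) (resid u k x)) = 0" by (simp add: ip_def)
    then show "(\<Sum>i<k. (cmod (u i x))\<^sup>2) = 1" using resid_Re[OF assms(1)] by simp
  qed
  then have "(\<Sum>x\<in>(UNIV::'b set). \<Sum>i<k. (cmod (u i x))\<^sup>2) = real CARD('b)" by simp
  then show False using sum_sq_total[OF assms(1)] assms(2) by simp
qed

lemma completeness:
  fixes u :: "nat \<Rightarrow> 'b::finite \<Rightarrow> complex"
  assumes "orthonormal u CARD('b)"
  shows "(\<Sum>i<CARD('b). cnj (u i x) * u i y) = (if y = x then 1 else 0)"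
proof -
  let ?D = "CARD('b)"
  have "(\<Sum>x\<in>(UNIV::'b set). 1 - (\<Sum>i<?D. (cmod (u i x))\<^sup>2)) = 0"
    using sum_sq_total[OF assms] by (simp add: sum_subtractf)
  moreover have "\<forall>x\<in>UNIV. 0 \<le> 1 - (\<Sum>i<?D. (cmod (u i x))\<^sup>2)"
    using bessel_pt[OF assms] by simp
  ultimately have "1 - (\<Sum>i<?D. (cmod (u i x))\<^sup>2) = 0"
    using sum_nonneg_eq_0_iff[of UNIV "\<lambda>x. 1 - (\<Sum>i<?D. (cmod (u i x))\<^sup>2)"] by simp
  then have "ip (resid u ?D x) (resid u ?D x) = 0"
    using resid_self[OF assms, of x] by simp
  then have "resid u ?D x = (\<lambda>_. 0)" by (rule ip_self_zero)
  then have "resid u ?D x y = 0" by simp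
  then show ?thesis unfolding resid_def by (simp add: mult.commute)
qed

lemma tquad:
  fixes a c :: real
  assumes c: "c \<le> 0" and h: "\<And>t. c * t\<^sup>2 + 2 * a * t \<le> 0"
  shows "a = 0"
proof -
  define t where "t = a / (1 - c)"
  have pos: "1 - c > 0" using c by simp
  have ta: "t * (1 - c) = a" unfolding t_def using pos by simp
  have "(c * t\<^sup>2 + 2 * a * t) * (1 - c)\<^sup>2 = c * (t * (1 - c))\<^sup>2 + 2 * a * (t * (1 - c)) * (1 - c)"
    by (simp add: power2_eq_square algebra_simps)
  also have "\<dots> = a\<^sup>2 * (2 - c)" unfolding ta by (simp add: power2_eq_square algebra_simps)
  finally have eq: "(c * t\<^sup>2 + 2 * a * t) * (1 - c)\<^sup>2 = a\<^sup>2 * (2 - c)" .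
  have "(c * t\<^sup>2 + 2 * a * t) * (1 - c)\<^sup>2 \<le> 0"
    using h[of t] by (simp add: mult_nonpos_nonneg)
  then have "a\<^sup>2 * (2 - c) \<le> 0" using eq by simp
  then have "a\<^sup>2 \<le> 0" using c by (simp add: mult_le_0_iff)
  then show ?thesis by simp
qed


lemma norm_vec_sq: "norm (x::complex^'b) = sqrt (\<Sum>a\<in>UNIV. (cmod (x$a))\<^sup>2)"
  by (simp add: norm_vec_def L2_set_def)

lemma normalize_vec:
  fixes y :: "'b::finite \<Rightarrow> complex"
  assumes "y \<noteq> (\<lambda>_. 0)"
  defines "s \<equiv> (\<Sum>a\<in>UNIV. (cmod (y a))\<^sup>2)"
  shows "s > 0" "(\<Sum>a\<in>UNIV. (cmod (of_real (1 / sqrt s) * y a))\<^sup>2) = 1"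
proof -
  obtain b where "y b \<noteq> 0" using assms(1) by auto
  then have "(cmod (y b))\<^sup>2 > 0" by simp
  moreover have "(cmod (y b))\<^sup>2 \<le> s" unfolding s_def
    by (rule member_le_sum) auto
  ultimately show sp: "s > 0" by linarith
  have "(\<Sum>a\<in>UNIV. (cmod (of_real (1 / sqrt s) * y a))\<^sup>2) = (\<Sum>a\<in>UNIV. (1/s) * (cmod (y a))\<^sup>2)"
    using sp by (intro sum.cong refl) (simp add: norm_mult norm_divide power_mult_distrib power_divide)
  also have "\<dots> = 1" using sp by (simp add: s_def[symmetric] sum_distrib_left[symmetric] sum_divide_distrib[symmetric])
  finally show "(\<Sum>a\<in>UNIV. (cmod (of_real (1 / sqrt s) * y a))\<^sup>2) = 1" .
qed

lemma rayleigh_max: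
  fixes A :: "'b::finite op" and u :: "nat \<Rightarrow> 'b \<Rightarrow> complex"
  assumes "\<exists>w. w \<noteq> (\<lambda>_. 0) \<and> (\<forall>i<k. ip (u i) w = 0)"
  shows "\<exists>v m. ip v v = 1 \<and> (\<forall>i<k. ip (u i) v = 0) \<and>
     (\<forall>y. (\<forall>i<k. ip (u i) y = 0) \<longrightarrow> Re (ip y (mat_vec A y)) \<le> m * Re (ip y y)) \<and>
     Re (ip v (mat_vec A v)) = m"
proof -
  define S where "S = sphere (0::complex^'b) 1 \<inter> {x. \<forall>i. i < k \<longrightarrow> ip (u i) (vec_nth x) = 0}"
  define f where "f x = Re (ip (vec_nth x) (mat_vec A (vec_nth x)))" for x :: "complex^'b"
  have cl: "closed {x::complex^'b. \<forall>i. i < k \<longrightarrow> ip (u i) (vec_nth x) = 0}"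
  proof (intro closed_Collect_all closed_Collect_imp)
    fix i show "open {x::complex^'b. i < k}" by (cases "i < k") auto
    show "closed {x::complex^'b. ip (u i) (vec_nth x) = 0}"
      unfolding ip_def by (intro closed_Collect_eq continuous_intros)
  qed
  have cpt: "compact S" unfolding S_def using cl by (intro compact_Int_closed) auto
  have cont: "continuous_on S f" unfolding f_def ip_def mat_vec_def
    by (intro continuous_intros)
  have sphere_iff: "x \<in> sphere 0 1 \<longleftrightarrow> (\<Sum>a\<in>UNIV. (cmod (x$a))\<^sup>2) = 1" for x :: "complex^'b"
    by (simp add: norm_vec_sq)
  obtain w where w: "w \<noteq> (\<lambda>_. 0)" "\<forall>i<k. ip (u i) w = 0" using assms by blast
  define c where "c = (of_real (1 / sqrt (\<Sum>a\<in>UNIV. (cmod (w a))\<^sup>2)) :: complex)"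
  have "(\<chi> a. c * w a) \<in> sphere 0 1"
    unfolding sphere_iff vec_lambda_beta c_def by (rule normalize_vec(2)[OF w(1)])
  moreover have "(($) (\<chi> a. c * w a)) = (\<lambda>a. c * w a)" by (rule ext) simp
  ultimately have "(\<chi> a. c * w a) \<in> S"
    unfolding S_def using w(2) by (simp add: ip_scale_r)
  then have ne: "S \<noteq> {}" by blast
  obtain x where x: "x \<in> S" "\<forall>y\<in>S. f y \<le> f x"
    using continuous_attains_sup[OF cpt ne cont] by blast
  define v where "v = vec_nth x"
  define m where "m = f x"
  have vS: "(\<Sum>a\<in>UNIV. (cmod (v a))\<^sup>2) = 1" "\<forall>i<k. ip (u i) v = 0"
    using x(1) unfolding S_def v_def by (auto simp: norm_vec_sq)
  have "ip v v = 1" using vS(1) ip_self[of v] by simp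
  moreover have "Re (ip v (mat_vec A v)) = m" unfolding m_def f_def v_def ..
  moreover have "Re (ip y (mat_vec A y)) \<le> m * Re (ip y y)" if y: "\<forall>i<k. ip (u i) y = 0" for y
  proof (cases "y = (\<lambda>_. 0)")
    case True then show ?thesis by (simp add: ip_def)
  next
    case False
    define s where "s = (\<Sum>a\<in>UNIV. (cmod (y a))\<^sup>2)"
    have sp: "s > 0" using normalize_vec(1)[OF False] unfolding s_def .
    define d where "d = (of_real (1 / sqrt s) :: complex)"
    have "(\<chi> a. d * y a) \<in> sphere 0 1"
      unfolding sphere_iff vec_lambda_beta d_def s_def by (rule normalize_vec(2)[OF False])
    moreover have yl: "(($) (\<chi> a. d * y a)) = (\<lambda>a. d * y a)" by (rule ext) simp
    ultimately have zS: "(\<chi> a. d * y a) \<in> S"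
      unfolding S_def using y by (simp add: ip_scale_r)
    have e1: "f (\<chi> a. d * y a) = Re (cnj d * d * ip y (mat_vec A y))"
      unfolding f_def yl mat_vec_scale ip_scale_r ip_scale_l by (simp add: d_def)
    have e2: "cnj d * d = of_real (1 / s)" unfolding d_def using sp
      by (simp flip: of_real_mult add: real_sqrt_mult[symmetric])
    have "f (\<chi> a. d * y a) = (1 / s) * Re (ip y (mat_vec A y))" unfolding e1 e2 by simp
    with x(2) zS have "(1 / s) * Re (ip y (mat_vec A y)) \<le> m" unfolding m_def by metis
    then have "Re (ip y (mat_vec A y)) \<le> m * s" using sp by (simp add: field_simps)
    moreover have "Re (ip y y) = s" unfolding s_def by (rule ip_self_Re)
    ultimately show ?thesis by simp
  qed
  ultimately show ?thesis using vS(2) by blast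
qed


lemma max_is_eigen:
  fixes A :: "'b::finite op"
  assumes herm: "herm A"
    and eig: "\<forall>i<k. mat_vec A (u i) = (\<lambda>a. of_real (l i) * u i a)"
    and vW: "\<forall>i<k. ip (u i) v = 0" and vn: "ip v v = 1"
    and mx: "\<forall>y. (\<forall>i<k. ip (u i) y = 0) \<longrightarrow> Re (ip y (mat_vec A y)) \<le> m * Re (ip y y)"
    and vm: "Re (ip v (mat_vec A v)) = m"
  shows "mat_vec A v = (\<lambda>a. of_real m * v a)"
proof -
  define g where "g = (\<lambda>a. mat_vec A v a - of_real m * v a)"
  define Q where "Q y = Re (ip y (mat_vec A y)) - m * Re (ip y y)" for y
  have Qle: "Q y \<le> 0" if "\<forall>i<k. ip (u i) y = 0" for y using mx that unfolding Q_def by auto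
  have Qv: "Q v = 0" using vn vm unfolding Q_def by simp
  have sym: "Re (ip v (mat_vec A w)) = Re (ip w (mat_vec A v))" for w
  proof -
    have "ip v (mat_vec A w) = cnj (ip w (mat_vec A v))"
      using ip_herm[OF herm, of v w] ip_cnj[of "mat_vec A v" w] by simp
    then show ?thesis by simp
  qed
  have sym2: "Re (ip v w) = Re (ip w v)" for w
    using ip_cnj[of v w] by simp
  have expand: "Q (\<lambda>a. v a + of_real t * w a) = Q v + 2 * t * Re (ip w g) + t\<^sup>2 * Q w" for t w
  proof -
    have "Q (\<lambda>a. v a + of_real t * w a) =
       Re (ip v (mat_vec A v) + of_real t * ip v (mat_vec A w) + (of_real t * ip w (mat_vec A v) + of_real t * (of_real t * ip w (mat_vec A w))))
       - m * Re (ip v v + of_real t * ip v w + (of_real t * ip w v + of_real t * (of_real t * ip w w)))"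
      unfolding Q_def mat_vec_add mat_vec_scale ip_add_l ip_add_r ip_scale_l ip_scale_r
      by simp
    also have "\<dots> = Q v + 2 * t * Re (ip w g) + t\<^sup>2 * Q w"
      unfolding Q_def g_def ip_diff_r ip_scale_r
      using sym[of w] sym2[of w] by (simp add: algebra_simps power2_eq_square)
    finally show ?thesis .
  qed
  have Re0: "Re (ip w g) = 0" if wW: "\<forall>i<k. ip (u i) w = 0" for w
  proof (rule tquad)
    show "Q w \<le> 0" using Qle wW by blast
    fix t
    have "\<forall>i<k. ip (u i) (\<lambda>a. v a + of_real t * w a) = 0"
      using vW wW by (simp add: ip_add_r ip_scale_r)
    then have "Q (\<lambda>a. v a + of_real t * w a) \<le> 0" by (rule Qle)
    then show "Q w * t\<^sup>2 + 2 * Re (ip w g) * t \<le> 0" using expand[of t w] Qv by (simp add: algebra_simps)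
  qed
  have ipz: "ip w g = 0" if wW: "\<forall>i<k. ip (u i) w = 0" for w
  proof (rule complex_eqI)
    show "Re (ip w g) = Re 0" using Re0[OF wW] by simp
    have "\<forall>i<k. ip (u i) (\<lambda>a. \<i> * w a) = 0" using wW by (simp add: ip_scale_r)
    then have "Re (ip (\<lambda>a. \<i> * w a) g) = 0" by (rule Re0)
    then show "Im (ip w g) = Im 0" by (simp add: ip_scale_l)
  qed
  have gW: "\<forall>i<k. ip (u i) g = 0"
  proof (intro allI impI)
    fix i assume i: "i < k"
    have "ip (u i) g = ip (mat_vec A (u i)) v - of_real m * ip (u i) v"
      unfolding g_def ip_diff_r ip_scale_r ip_herm[OF herm] ..
    also have "\<dots> = 0" using eig vW i by (simp add: ip_scale_l)
    finally show "ip (u i) g = 0" .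
  qed
  have "g = (\<lambda>_. 0)" using ipz[OF gW] by (rule ip_self_zero)
  then show ?thesis unfolding g_def by (auto simp: fun_eq_iff)
qed


lemma spectral:
  fixes A :: "'b::finite op" and psi :: "'b \<Rightarrow> complex"
  assumes herm: "herm A" and pn: "ip psi psi = 1" and pe: "mat_vec A psi = psi"
  shows "\<exists>u l. orthonormal u CARD('b) \<and> u 0 = psi \<and> l 0 = 1 \<and>
           (\<forall>i<CARD('b). mat_vec A (u i) = (\<lambda>a. of_real (l i) * u i a))"
proof -
  have "\<forall>k. 1 \<le> k \<longrightarrow> k \<le> CARD('b) \<longrightarrow> (\<exists>u l. orthonormal u k \<and> u 0 = psi \<and> l 0 = 1 \<and>
           (\<forall>i<k. mat_vec A (u i) = (\<lambda>a. of_real (l i) * u i a)))"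
  proof (intro allI)
    fix k show "1 \<le> k \<longrightarrow> k \<le> CARD('b) \<longrightarrow> (\<exists>u l. orthonormal u k \<and> u 0 = psi \<and> l 0 = 1 \<and>
           (\<forall>i<k. mat_vec A (u i) = (\<lambda>a. of_real (l i) * u i a)))"
    proof (induction k)
      case 0 then show ?case by simp
    next
      case (Suc k)
      show ?case
      proof (intro impI)
        assume k1: "1 \<le> Suc k" and kD: "Suc k \<le> CARD('b)"
        show "\<exists>u l. orthonormal u (Suc k) \<and> u 0 = psi \<and> l 0 = 1 \<and>
           (\<forall>i<Suc k. mat_vec A (u i) = (\<lambda>a. of_real (l i) * u i a))"
        proof (cases "k = 0")
          case True
          have "orthonormal (\<lambda>_. psi) (Suc k)" using True pn unfolding orthonormal_def by simp
          moreover have "mat_vec A psi = (\<lambda>a. of_real 1 * psi a)" using pe by simp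
          ultimately show ?thesis by (intro exI[of _ "\<lambda>_. psi"] exI[of _ "\<lambda>_. 1"]) simp
        next
          case False
          then obtain u l where ul: "orthonormal u k" "u 0 = psi" "l 0 = 1"
            "\<forall>i<k. mat_vec A (u i) = (\<lambda>a. of_real (l i) * u i a)"
            using Suc.IH kD by auto
          have "k < CARD('b)" using kD by simp
          from rayleigh_max[OF exists_orth_vec[OF ul(1) this], of A]
          obtain v m where vm: "ip v v = 1" "\<forall>i<k. ip (u i) v = 0"
            "\<forall>y. (\<forall>i<k. ip (u i) y = 0) \<longrightarrow> Re (ip y (mat_vec A y)) \<le> m * Re (ip y y)"
            "Re (ip v (mat_vec A v)) = m" by blast
          have ev: "mat_vec A v = (\<lambda>a. of_real m * v a)"
            by (rule max_is_eigen[OF herm ul(4) vm(2) vm(1) vm(3) vm(4)])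
          define u' where "u' = u(k := v)"
          define l' where "l' = l(k := m)"
          have "orthonormal u' (Suc k)"
            unfolding orthonormal_def
          proof (intro allI impI)
            fix i j assume i: "i < Suc k" and j: "j < Suc k"
            show "ip (u' i) (u' j) = (if i = j then 1 else 0)"
            proof (cases "i = k"; cases "j = k")
              assume "i = k" "j = k" then show ?thesis using vm(1) unfolding u'_def by simp
            next
              assume "i = k" "j \<noteq> k"
              then have "ip (u' i) (u' j) = cnj (ip (u j) v)"
                unfolding u'_def using ip_cnj[of v "u j"] by simp
              then show ?thesis using vm(2) j \<open>i = k\<close> \<open>j \<noteq> k\<close> by simp
            next
              assume "i \<noteq> k" "j = k"
              then show ?thesis using vm(2) i unfolding u'_def by simp
            next
              assume "i \<noteq> k" "j \<noteq> k"
              then show ?thesis using ul(1) i j unfolding u'_def orthonormal_def by simp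
            qed
          qed
          moreover have "u' 0 = psi" "l' 0 = 1" using False ul unfolding u'_def l'_def by auto
          moreover have "\<forall>i<Suc k. mat_vec A (u' i) = (\<lambda>a. of_real (l' i) * u' i a)"
            using ul(4) ev unfolding u'_def l'_def by (auto simp: less_Suc_eq)
          ultimately show ?thesis by blast
        qed
      qed
    qed
  qed
  moreover have "1 \<le> CARD('b)" by (simp add: Suc_leI)
  ultimately show ?thesis by blast
qed



definition lists_on :: "'c set \<Rightarrow> nat \<Rightarrow> 'c list set" where
  "lists_on A n = {xs. length xs = n \<and> set xs \<subseteq> A}"

lemma idx_lists_on: "idx n = lists_on UNIV n"
  unfolding idx_def lists_on_def by simp

lemma finite_lists_on: "finite A \<Longrightarrow> finite (lists_on A n)"
  unfolding lists_on_def using finite_lists_length_eq[of A n] by (simp add: conj_commute)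

lemma finite_idx: "finite (idx n :: 'b::finite list set)"
  unfolding idx_lists_on by (rule finite_lists_on) simp

lemma lists_on_Suc: "lists_on A (Suc n) = (\<lambda>(a, xs). a # xs) ` (A \<times> lists_on A n)"
proof
  show "lists_on A (Suc n) \<subseteq> (\<lambda>(a, xs). a # xs) ` (A \<times> lists_on A n)"
  proof
    fix xs assume "xs \<in> lists_on A (Suc n)"
    then obtain a ys where "xs = a # ys" "length ys = n" "a \<in> A" "set ys \<subseteq> A"
      unfolding lists_on_def by (cases xs) auto
    then show "xs \<in> (\<lambda>(a, xs). a # xs) ` (A \<times> lists_on A n)"
      unfolding lists_on_def by auto
  qed
  show "(\<lambda>(a, xs). a # xs) ` (A \<times> lists_on A n) \<subseteq> lists_on A (Suc n)"
    unfolding lists_on_def by auto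
qed

lemma prod_sum_lists:
  fixes f :: "nat \<Rightarrow> 'c \<Rightarrow> 'd::comm_semiring_1"
  assumes "finite A"
  shows "(\<Prod>k<n. \<Sum>a\<in>A. f k a) = (\<Sum>xs\<in>lists_on A n. \<Prod>k<n. f k (xs ! k))"
  using assms
proof (induction n arbitrary: f)
  case 0
  have "lists_on A 0 = {[]}" unfolding lists_on_def by auto
  then show ?case by simp
next
  case (Suc n)
  have inj: "inj_on (\<lambda>(a, xs). a # xs) (A \<times> lists_on A n)" by (auto simp: inj_on_def)
  have "(\<Prod>k<Suc n. \<Sum>a\<in>A. f k a) = (\<Sum>a\<in>A. f 0 a) * (\<Prod>k<n. \<Sum>a\<in>A. f (Suc k) a)"
    by (rule prod.lessThan_Suc_shift)
  also have "\<dots> = (\<Sum>a\<in>A. f 0 a) * (\<Sum>xs\<in>lists_on A n. \<Prod>k<n. f (Suc k) (xs ! k))"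
    using Suc by simp
  also have "\<dots> = (\<Sum>a\<in>A. \<Sum>xs\<in>lists_on A n. f 0 a * (\<Prod>k<n. f (Suc k) (xs ! k)))"
    by (rule sum_product)
  also have "\<dots> = (\<Sum>p\<in>A \<times> lists_on A n. (\<lambda>xs. \<Prod>k<Suc n. f k (xs ! k)) ((\<lambda>(a, xs). a # xs) p))"
    by (subst sum.cartesian_product, rule sum.cong[OF refl], clarify, subst prod.lessThan_Suc_shift, simp)
  also have "\<dots> = (\<Sum>xs\<in>lists_on A (Suc n). \<Prod>k<Suc n. f k (xs ! k))"
    unfolding lists_on_Suc by (rule sum.reindex[OF inj, symmetric, unfolded comp_def])
  finally show ?case .
qed

definition Uv :: "(nat \<Rightarrow> 'b \<Rightarrow> complex) \<Rightarrow> nat list \<Rightarrow> 'b list \<Rightarrow> complex" where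
  "Uv u js xs = (\<Prod>k<length js. u (js ! k) (xs ! k))"

definition qq :: "(nat \<Rightarrow> 'b::finite \<Rightarrow> complex) \<Rightarrow> nat \<Rightarrow> 'b list op \<Rightarrow> nat list \<Rightarrow> real" where
  "qq u n rho js = Re (\<Sum>ys\<in>idx n. \<Sum>xs\<in>idx n. cnj (Uv u js ys) * rho ys xs * Uv u js xs)"

lemma Re_ofreal_mult: "Re (of_real a * z) = a * Re z"
  by simp

lemma tr_expand:
  fixes u :: "nat \<Rightarrow> 'b::finite \<Rightarrow> complex" and As :: "'b op list"
  assumes len: "length As = n"
    and As: "\<forall>k<n. \<forall>x y. (As ! k) x y = (\<Sum>j<D. of_real (c k j) * u j x * cnj (u j y))"
  shows "tr_prod n (tensor_ops As) rho = (\<Sum>js\<in>lists_on {..<D} n. (\<Prod>k<n. c k (js ! k)) * qq u n rho js)"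
proof -
  let ?L = "lists_on {..<D} n"
  let ?I = "idx n :: 'b list set"
  define G where "G js xs ys = of_real (\<Prod>k<n. c k (js ! k)) * (cnj (Uv u js ys) * rho ys xs * Uv u js xs)" for js xs ys
  have T: "tensor_ops As xs ys = (\<Sum>js\<in>?L. of_real (\<Prod>k<n. c k (js ! k)) * Uv u js xs * cnj (Uv u js ys))" for xs ys
  proof -
    have "tensor_ops As xs ys = (\<Prod>k<n. \<Sum>j<D. of_real (c k j) * u j (xs ! k) * cnj (u j (ys ! k)))"
      unfolding tensor_ops_def len using As by simp
    also have "\<dots> = (\<Sum>js\<in>?L. \<Prod>k<n. of_real (c k (js ! k)) * u (js ! k) (xs ! k) * cnj (u (js ! k) (ys ! k)))"
      by (rule prod_sum_lists) simp
    also have "\<dots> = (\<Sum>js\<in>?L. of_real (\<Prod>k<n. c k (js ! k)) * Uv u js xs * cnj (Uv u js ys))"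
    proof (rule sum.cong[OF refl])
      fix js assume "js \<in> ?L"
      then have "length js = n" unfolding lists_on_def by simp
      then show "(\<Prod>k<n. of_real (c k (js ! k)) * u (js ! k) (xs ! k) * cnj (u (js ! k) (ys ! k))) =
          of_real (\<Prod>k<n. c k (js ! k)) * Uv u js xs * cnj (Uv u js ys)"
        unfolding Uv_def by (simp add: prod.distrib of_real_prod cnj_prod)
    qed
    finally show ?thesis .
  qed
  have "tr_prod n (tensor_ops As) rho = Re (\<Sum>xs\<in>?I. \<Sum>ys\<in>?I. \<Sum>js\<in>?L. G js xs ys)"
    unfolding tr_prod_def T sum_distrib_right G_def
    by (intro arg_cong[where f=Re] sum.cong refl) (simp add: mult_ac)
  also have "(\<Sum>xs\<in>?I. \<Sum>ys\<in>?I. \<Sum>js\<in>?L. G js xs ys) = (\<Sum>ys\<in>?I. \<Sum>xs\<in>?I. \<Sum>js\<in>?L. G js xs ys)"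
    by (rule sum.swap)
  also have "\<dots> = (\<Sum>ys\<in>?I. \<Sum>js\<in>?L. \<Sum>xs\<in>?I. G js xs ys)"
    by (rule sum.cong[OF refl], rule sum.swap)
  also have "\<dots> = (\<Sum>js\<in>?L. \<Sum>ys\<in>?I. \<Sum>xs\<in>?I. G js xs ys)"
    by (rule sum.swap)
  also have "\<dots> = (\<Sum>js\<in>?L. of_real (\<Prod>k<n. c k (js ! k)) *
        (\<Sum>ys\<in>?I. \<Sum>xs\<in>?I. cnj (Uv u js ys) * rho ys xs * Uv u js xs))"
    unfolding G_def by (simp add: sum_distrib_left)
  also have "Re \<dots> = (\<Sum>js\<in>?L. (\<Prod>k<n. c k (js ! k)) * qq u n rho js)"
    by (simp only: qq_def Re_sum Re_ofreal_mult)
  finally show ?thesis .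
qed

lemma qq_nonneg: assumes "density_op n rho" shows "0 \<le> qq u n rho js"
proof -
  have "psd_on (idx n) rho" using assms unfolding density_op_def by simp
  then have "0 \<le> Re (\<Sum>i\<in>idx n. \<Sum>j\<in>idx n. cnj (Uv u js i) * rho i j * Uv u js j)"
    unfolding psd_on_def by blast
  then show ?thesis unfolding qq_def .
qed

lemma tensor_id:
  assumes "xs \<in> idx n" "ys \<in> idx n"
  shows "tensor_ops (replicate n (id_op :: 'b op)) xs ys = (if xs = ys then 1 else 0)"
proof (cases "xs = ys")
  case True then show ?thesis unfolding tensor_ops_def id_op_def by simp
next
  case False
  have "length xs = n" "length ys = n" using assms unfolding idx_def by auto
  then obtain k where k: "k < n" "xs ! k \<noteq> ys ! k" using False nth_equalityI by metis
  have "tensor_ops (replicate n (id_op :: 'b op)) xs ys = (\<Prod>k<n. id_op (xs ! k) (ys ! k))"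
    unfolding tensor_ops_def by simp
  also have "\<dots> = 0" using k by (intro prod_zero) (auto simp: id_op_def)
  finally show ?thesis using False by simp
qed

lemma qq_sum:
  fixes u :: "nat \<Rightarrow> 'b::finite \<Rightarrow> complex"
  assumes rho: "density_op n rho"
    and idexp: "\<forall>x y. (id_op :: 'b op) x y = (\<Sum>j<D. of_real 1 * u j x * cnj (u j y))"
  shows "(\<Sum>js\<in>lists_on {..<D} n. qq u n rho js) = 1"
proof -
  have "tr_prod n (tensor_ops (replicate n (id_op :: 'b op))) rho =
        (\<Sum>js\<in>lists_on {..<D} n. (\<Prod>k<n. (\<lambda>k j. 1) k (js ! k)) * qq u n rho js)"
    by (rule tr_expand) (use idexp in auto)
  also have "\<dots> = (\<Sum>js\<in>lists_on {..<D} n. qq u n rho js)" by simp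
  finally have e: "tr_prod n (tensor_ops (replicate n (id_op :: 'b op))) rho = (\<Sum>js\<in>lists_on {..<D} n. qq u n rho js)" .
  have "tr_prod n (tensor_ops (replicate n (id_op :: 'b op))) rho =
      Re (\<Sum>xs\<in>idx n. \<Sum>ys\<in>idx n. (if xs = ys then 1 else 0) * rho ys xs)"
    unfolding tr_prod_def by (intro arg_cong[where f=Re] sum.cong refl) (simp add: tensor_id)
  also have "\<dots> = Re (\<Sum>xs\<in>idx n. rho xs xs)"
    by (simp add: if_distrib[of "\<lambda>z. z * _"] sum.delta finite_idx cong: if_cong)
  also have "\<dots> = 1" using rho unfolding density_op_def by simp
  finally show ?thesis using e by simp
qed


lemma perm_bij_idx:
  assumes s: "s permutes {..<n}"
  shows "bij_betw (permute_list s) (idx n) (idx n)"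
proof (rule bij_betw_byWitness[where f'="permute_list (inv s)"])
  have inv: "inv s permutes {..<n}" using s by (rule permutes_inv)
  show "\<forall>a\<in>idx n. permute_list (inv s) (permute_list s a) = a"
  proof
    fix a assume "a \<in> idx n"
    then have "inv s permutes {..<length a}" using inv unfolding idx_def by simp
    then have "permute_list (s \<circ> inv s) a = permute_list (inv s) (permute_list s a)"
      by (rule permute_list_compose)
    then show "permute_list (inv s) (permute_list s a) = a"
      using permutes_inv_o(1)[OF s] by simp
  qed
  show "\<forall>a\<in>idx n. permute_list s (permute_list (inv s) a) = a"
  proof
    fix a assume "a \<in> idx n"
    then have "s permutes {..<length a}" using s unfolding idx_def by simp
    then have "permute_list (inv s \<circ> s) a = permute_list s (permute_list (inv s) a)"
      by (rule permute_list_compose)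
    then show "permute_list s (permute_list (inv s) a) = a"
      using permutes_inv_o(2)[OF s] by simp
  qed
  show "permute_list s ` idx n \<subseteq> idx n" unfolding idx_def by auto
  show "permute_list (inv s) ` idx n \<subseteq> idx n" unfolding idx_def by auto
qed

lemma Uv_perm:
  assumes s: "s permutes {..<n}" and "length js = n" "length xs = n"
  shows "Uv u (permute_list s js) (permute_list s xs) = Uv u js xs"
proof -
  have "Uv u (permute_list s js) (permute_list s xs) = (\<Prod>k<n. u (js ! s k) (xs ! s k))"
    unfolding Uv_def using assms by (simp add: permute_list_nth)
  also have "\<dots> = prod ((\<lambda>k. u (js ! k) (xs ! k)) \<circ> s) {..<n}" by (simp add: comp_def)
  also have "\<dots> = (\<Prod>k<n. u (js ! k) (xs ! k))" by (rule prod.permute[OF s, symmetric])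
  finally show ?thesis unfolding Uv_def using assms by simp
qed

lemma qq_perm:
  fixes u :: "nat \<Rightarrow> 'b::finite \<Rightarrow> complex" and rho :: "'b list op"
  assumes pi: "perm_invariant n rho" and s: "s permutes {..<n}" and js: "length js = n"
  shows "qq u n rho (permute_list s js) = qq u n rho js"
proof -
  let ?I = "idx n :: 'b list set"
  have b: "bij_betw (permute_list s) ?I ?I" by (rule perm_bij_idx[OF s])
  define F where "F js ys xs = cnj (Uv u js ys) * rho ys xs * Uv u js xs" for js ys xs
  have "(\<Sum>ys\<in>?I. \<Sum>xs\<in>?I. F (permute_list s js) ys xs) = (\<Sum>ys\<in>?I. \<Sum>xs\<in>?I. F (permute_list s js) (permute_list s ys) xs)"
    by (rule sum.reindex_bij_betw[OF b, of "\<lambda>ys. \<Sum>xs\<in>?I. F (permute_list s js) ys xs", symmetric])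
  also have "\<dots> = (\<Sum>ys\<in>?I. \<Sum>xs\<in>?I. F (permute_list s js) (permute_list s ys) (permute_list s xs))"
    by (rule sum.cong[OF refl], rule sum.reindex_bij_betw[OF b, symmetric])
  also have "\<dots> = (\<Sum>ys\<in>?I. \<Sum>xs\<in>?I. F js ys xs)"
  proof (intro sum.cong refl)
    fix ys xs assume "ys \<in> ?I" "xs \<in> ?I"
    moreover then have "rho (permute_list s ys) (permute_list s xs) = rho ys xs" using pi s unfolding perm_invariant_def by blast
    ultimately show "F (permute_list s js) (permute_list s ys) (permute_list s xs) = F js ys xs"
      unfolding F_def using Uv_perm[OF s js, of ys u] Uv_perm[OF s js, of xs u] unfolding idx_def by simp
  qed
  finally show ?thesis unfolding qq_def F_def by simp
qed



lemma perm_bij_lists: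
  assumes s: "s permutes {..<n}"
  shows "bij_betw (permute_list s) (lists_on A n) (lists_on A n)"
proof (rule bij_betw_byWitness[where f'="permute_list (inv s)"])
  have inv: "inv s permutes {..<n}" using s by (rule permutes_inv)
  show "\<forall>a\<in>lists_on A n. permute_list (inv s) (permute_list s a) = a"
  proof
    fix a assume "a \<in> lists_on A n"
    then have "inv s permutes {..<length a}" using inv unfolding lists_on_def by simp
    then have "permute_list (s \<circ> inv s) a = permute_list (inv s) (permute_list s a)"
      by (rule permute_list_compose)
    then show "permute_list (inv s) (permute_list s a) = a"
      using permutes_inv_o(1)[OF s] by simp
  qed
  show "\<forall>a\<in>lists_on A n. permute_list s (permute_list (inv s) a) = a"
  proof
    fix a assume "a \<in> lists_on A n"
    then have "s permutes {..<length a}" using s unfolding lists_on_def by simp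
    then have "permute_list (inv s \<circ> s) a = permute_list s (permute_list (inv s) a)"
      by (rule permute_list_compose)
    then show "permute_list s (permute_list (inv s) a) = a"
      using permutes_inv_o(2)[OF s] by simp
  qed
  show "permute_list s ` lists_on A n \<subseteq> lists_on A n"
    unfolding lists_on_def using s inv by auto
  show "permute_list (inv s) ` lists_on A n \<subseteq> lists_on A n"
    unfolding lists_on_def using s inv by auto
qed

lemma lists_on_nth:
  assumes "js \<in> lists_on A n" "k < n"
  shows "js ! k \<in> A"
proof -
  have "length js = n" "set js \<subseteq> A" using assms(1) unfolding lists_on_def by auto
  moreover then have "js ! k \<in> set js" using assms(2) by (intro nth_mem) simp
  ultimately show ?thesis by blast
qed

lemma sym_bound:
  fixes q g :: "nat list \<Rightarrow> real"
  assumes qp: "\<forall>s js. s permutes {..<Suc N} \<longrightarrow> js \<in> lists_on A (Suc N) \<longrightarrow> q (permute_list s js) = q js"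
    and qn: "\<forall>js\<in>lists_on A (Suc N). 0 \<le> q js"
    and pt: "\<forall>js\<in>lists_on A (Suc N). (\<Sum>i<Suc N. g (permute_list (Transposition.transpose i N) js)) \<le> 0"
  shows "(\<Sum>js\<in>lists_on A (Suc N). q js * g js) \<le> 0"
proof -
  let ?L = "lists_on A (Suc N)"
  have each: "(\<Sum>js\<in>?L. q js * g js) = (\<Sum>js\<in>?L. q js * g (permute_list (Transposition.transpose i N) js))"
    if i: "i < Suc N" for i
  proof -
    let ?t = "Transposition.transpose i N"
    have tp: "?t permutes {..<Suc N}" using i by (intro permutes_swap_id) auto
    have "(\<Sum>js\<in>?L. q js * g js) = (\<Sum>js\<in>?L. q (permute_list ?t js) * g (permute_list ?t js))"
      by (rule sum.reindex_bij_betw[OF perm_bij_lists[OF tp], of "\<lambda>js. q js * g js", symmetric])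
    also have "\<dots> = (\<Sum>js\<in>?L. q js * g (permute_list ?t js))"
      using qp tp by (intro sum.cong refl) auto
    finally show ?thesis .
  qed
  have "real (Suc N) * (\<Sum>js\<in>?L. q js * g js) = (\<Sum>i<Suc N. \<Sum>js\<in>?L. q js * g js)" by simp
  also have "\<dots> = (\<Sum>i<Suc N. \<Sum>js\<in>?L. q js * g (permute_list (Transposition.transpose i N) js))"
    by (rule sum.cong[OF refl], rule each, simp)
  also have "\<dots> = (\<Sum>js\<in>?L. \<Sum>i<Suc N. q js * g (permute_list (Transposition.transpose i N) js))"
    by (rule sum.swap)
  also have "\<dots> = (\<Sum>js\<in>?L. q js * (\<Sum>i<Suc N. g (permute_list (Transposition.transpose i N) js)))"
    by (simp only: sum_distrib_left)
  also have "\<dots> \<le> 0"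
    by (rule sum_nonpos, rule mult_nonneg_nonpos) (use qn pt in auto)
  finally show ?thesis by (simp add: mult_le_0_iff)
qed

definition Exc :: "(nat \<Rightarrow> real) \<Rightarrow> nat \<Rightarrow> nat \<Rightarrow> real" where
  "Exc a n i = (\<Prod>k<n. if k = i then 1 else a k)"

lemma Exc_Suc: "i < n \<Longrightarrow> Exc a (Suc n) i = a n * Exc a n i"
  unfolding Exc_def by simp

lemma Exc_last: "Exc a (Suc n) n = (\<Prod>k<n. a k)"
  unfolding Exc_def by simp

lemma Exc_nonneg: "\<forall>k<n. 0 \<le> a k \<Longrightarrow> 0 \<le> Exc a n i"
  unfolding Exc_def by (intro prod_nonneg) auto

lemma Exc_mult: "i < n \<Longrightarrow> a i * Exc a n i = (\<Prod>k<n. a k)"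
proof -
  assume i: "i < n"
  have "(\<Prod>k<n. a k) = a i * (\<Prod>k\<in>{..<n} - {i}. a k)"
    using i by (subst prod.remove[of _ i]) auto
  moreover have "Exc a n i = (\<Prod>k\<in>{..<n} - {i}. a k)"
    unfolding Exc_def using i by (subst prod.remove[of _ i]) auto
  ultimately show ?thesis by simp
qed

lemma prod_01: "\<forall>k<n. 0 \<le> a k \<and> a k \<le> (1::real) \<Longrightarrow> 0 \<le> (\<Prod>k<n. a k) \<and> (\<Prod>k<n. a k) \<le> 1"
  by (auto intro: prod_nonneg prod_le_1)

lemma ineq1:
  assumes "\<forall>k<n. 0 \<le> a k \<and> a k \<le> (1::real)"
  shows "(\<Sum>i<n. Exc a n i) - (real n - 1) * (\<Prod>k<n. a k) \<le> 1"
  using assms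
proof (induction n)
  case 0 then show ?case by simp
next
  case (Suc n)
  have IH: "(\<Sum>i<n. Exc a n i) - (real n - 1) * (\<Prod>k<n. a k) \<le> 1" using Suc by simp
  have P: "0 \<le> (\<Prod>k<n. a k)" "(\<Prod>k<n. a k) \<le> 1" using prod_01[of n a] Suc.prems by auto
  have an: "0 \<le> a n" "a n \<le> 1" using Suc.prems by auto
  have "(\<Sum>i<Suc n. Exc a (Suc n) i) = a n * (\<Sum>i<n. Exc a n i) + (\<Prod>k<n. a k)"
    by (simp add: Exc_Suc Exc_last sum_distrib_left)
  then have "(\<Sum>i<Suc n. Exc a (Suc n) i) - (real (Suc n) - 1) * (\<Prod>k<Suc n. a k)
      = a n * ((\<Sum>i<n. Exc a n i) - (real n - 1) * (\<Prod>k<n. a k)) + (1 - a n) * (\<Prod>k<n. a k)"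
    by (simp add: algebra_simps)
  also have "\<dots> \<le> a n * 1 + (1 - a n) * 1"
    using IH P an by (intro add_mono mult_left_mono) auto
  finally show ?case by simp
qed

lemma ineq2:
  assumes "\<forall>k<n. (b k \<longrightarrow> 0 \<le> a k \<and> a k \<le> 1/2) \<and> (\<not> b k \<longrightarrow> a k = (1::real))"
  shows "(\<Sum>i<n. if b i then Exc a n i else 0) \<le> 1 \<and>
         (\<Sum>i<n. if b i then Exc a n i else 0) \<le> 2 * (1 - (\<Prod>k<n. a k)) \<and>
         0 \<le> (\<Prod>k<n. a k) \<and> (\<Prod>k<n. a k) \<le> 1"
  using assms
proof (induction n)
  case 0 then show ?case by simp
next
  case (Suc n)
  define T where "T = (\<Sum>i<n. if b i then Exc a n i else 0)"
  define P where "P = (\<Prod>k<n. a k)"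
  have IH: "T \<le> 1" "T \<le> 2 * (1 - P)" "0 \<le> P" "P \<le> 1" using Suc unfolding T_def P_def by auto
  have "(\<Sum>i<Suc n. if b i then Exc a (Suc n) i else 0) = a n * T + (if b n then P else 0)"
    unfolding T_def P_def by (simp add: Exc_Suc Exc_last sum_distrib_left if_distrib cong: if_cong)
  moreover have "(\<Prod>k<Suc n. a k) = a n * P" unfolding P_def by simp
  moreover have an: "(b n \<longrightarrow> 0 \<le> a n \<and> a n \<le> 1/2) \<and> (\<not> b n \<longrightarrow> a n = 1)" using Suc.prems by auto
  ultimately show ?case
  proof (cases "b n")
    case True
    then have a: "0 \<le> a n" "a n \<le> 1/2" using an by auto
    have "a n * T \<le> a n * (2 * (1 - P))" using IH a by (intro mult_left_mono) auto
    moreover have "a n * (2 * (1 - P)) \<le> (1/2) * (2 * (1 - P))" using IH a by (intro mult_right_mono) auto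
    moreover have "a n * P \<le> P" using IH a by (simp add: mult_left_le_one_le)
    moreover have "0 \<le> a n * P" using IH a by simp
    ultimately show ?thesis using True \<open>(\<Sum>i<Suc n. if b i then Exc a (Suc n) i else 0) = a n * T + (if b n then P else 0)\<close>
      \<open>(\<Prod>k<Suc n. a k) = a n * P\<close> IH a by (auto simp: algebra_simps)
  next
    case False
    then have "a n = 1" using an by auto
    then show ?thesis using False \<open>(\<Sum>i<Suc n. if b i then Exc a (Suc n) i else 0) = a n * T + (if b n then P else 0)\<close>
      \<open>(\<Prod>k<Suc n. a k) = a n * P\<close> IH unfolding T_def P_def by auto
  qed
qed


lemma transpose_nth:
  assumes "length js = Suc N" "i < Suc N" "k < Suc N"
  shows "permute_list (Transposition.transpose i N) js ! k = js ! (Transposition.transpose i N k)"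
proof -
  have "Transposition.transpose i N permutes {..<length js}" using assms by (intro permutes_swap_id) auto
  then show ?thesis using assms by (simp add: permute_list_nth)
qed

lemma wp_transpose:
  assumes len: "length js = Suc N" and i: "i < Suc N"
  shows "(\<Prod>k<N. lam (permute_list (Transposition.transpose i N) js ! k)) = Exc (\<lambda>k. lam (js ! k)) (Suc N) i"
proof -
  let ?t = "Transposition.transpose i N"
  define h where "h m = (if m = i then 1 else lam (js ! m))" for m
  have tp: "?t permutes {..<Suc N}" using i by (intro permutes_swap_id) auto
  have "(\<Prod>k<N. lam (permute_list ?t js ! k)) = (\<Prod>k<N. lam (js ! ?t k))"
    using transpose_nth[OF len i] by (intro prod.cong refl) auto
  also have "\<dots> = (\<Prod>k<Suc N. if k = N then 1 else lam (js ! ?t k))"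
    by simp
  also have "\<dots> = (\<Prod>k<Suc N. h (?t k))"
    unfolding h_def by (intro prod.cong refl) (auto simp: Transposition.transpose_def)
  also have "\<dots> = prod (h \<circ> ?t) {..<Suc N}" by (simp add: comp_def)
  also have "\<dots> = prod h {..<Suc N}" by (rule prod.permute[OF tp, symmetric])
  finally show ?thesis unfolding Exc_def h_def .
qed

lemma last_transpose:
  assumes len: "length js = Suc N" and i: "i < Suc N"
  shows "permute_list (Transposition.transpose i N) js ! N = js ! i"
  using transpose_nth[OF len i, of N] by simp

lemma comb_main:
  fixes q :: "nat list \<Rightarrow> real" and lam :: "nat \<Rightarrow> real" and N D :: nat
  assumes qp: "\<forall>s js. s permutes {..<Suc N} \<longrightarrow> js \<in> lists_on {..<D} (Suc N) \<longrightarrow> q (permute_list s js) = q js"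
    and qn: "\<forall>js\<in>lists_on {..<D} (Suc N). 0 \<le> q js"
    and qs: "(\<Sum>js\<in>lists_on {..<D} (Suc N). q js) = 1"
    and lam0: "lam 0 = 1"
    and lamb: "\<forall>j<D. j \<noteq> 0 \<longrightarrow> 0 \<le> lam j \<and> lam j \<le> beta"
    and b1: "beta < 1"
  defines "p \<equiv> (\<Sum>js\<in>lists_on {..<D} (Suc N). q js * (\<Prod>k<N. lam (js ! k)))"
    and "f \<equiv> (\<Sum>js\<in>lists_on {..<D} (Suc N). q js * ((\<Prod>k<N. lam (js ! k)) * (if js ! N = 0 then 1 else 0)))"
  shows "real N * (1 - beta) * (p - f) + p \<le> 1"
    and "beta \<le> 1/2 \<Longrightarrow> (real N + 1) * (p - f) \<le> 1"
proof -
  let ?L = "lists_on {..<D} (Suc N)"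
  define wp where "wp js = (\<Prod>k<N. lam (js ! k))" for js
  define ind where "ind (js::nat list) = (if js ! N = 0 then 1 else (0::real))" for js
  define t where "t i = Transposition.transpose i N" for i
  have a01: "0 \<le> lam (js ! k) \<and> lam (js ! k) \<le> 1" if "js \<in> ?L" "k < Suc N" for js k
  proof -
    have "length js = Suc N" "set js \<subseteq> {..<D}" using that(1) unfolding lists_on_def by auto
    then have "js ! k \<in> set js" using that(2) by simp
    then have "js ! k < D" using \<open>set js \<subseteq> {..<D}\<close> by auto
    then show ?thesis using lamb lam0 b1 by (cases "js ! k = 0") force+
  qed
  have Exn: "0 \<le> Exc (\<lambda>k. lam (js ! k)) (Suc N) i" if "js \<in> ?L" for js i
    using a01[OF that] by (intro Exc_nonneg) auto
  have Ssum: "(\<Sum>i<Suc N. (\<lambda>k. lam (js ! k)) i * Exc (\<lambda>k. lam (js ! k)) (Suc N) i)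
      = real (Suc N) * (\<Prod>k<Suc N. lam (js ! k))" for js
  proof -
    have "(\<Sum>i<Suc N. (\<lambda>k. lam (js ! k)) i * Exc (\<lambda>k. lam (js ! k)) (Suc N) i)
        = (\<Sum>i<Suc N. \<Prod>k<Suc N. lam (js ! k))"
      by (rule sum.cong[OF refl], rule Exc_mult) simp
    then show ?thesis by simp
  qed
  have lenL: "length js = Suc N" if "js \<in> ?L" for js using that unfolding lists_on_def by auto
  define g where "g js = real N * (1 - beta) * (wp js - wp js * ind js) + wp js - 1" for js
  have sumg: "(\<Sum>js\<in>?L. q js * g js) = real N * (1 - beta) * (p - f) + p - 1"
    unfolding g_def p_def f_def wp_def ind_def
    by (simp add: algebra_simps sum.distrib sum_subtractf sum_distrib_left[symmetric] qs)
  have "(\<Sum>js\<in>?L. q js * g js) \<le> 0"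
  proof (rule sym_bound[OF qp qn], intro ballI)
    fix js assume js: "js \<in> ?L"
    let ?a = "\<lambda>k. lam (js ! k)"
    have gt: "g (permute_list (t i) js) \<le> (real N * (1 - ?a i) + 1) * Exc ?a (Suc N) i - 1" if i: "i < Suc N" for i
    proof -
      have w: "wp (permute_list (t i) js) = Exc ?a (Suc N) i"
        unfolding wp_def t_def by (rule wp_transpose[OF lenL[OF js] i])
      have d: "ind (permute_list (t i) js) = (if js ! i = 0 then 1 else 0)"
        unfolding ind_def t_def using last_transpose[OF lenL[OF js] i] by simp
      have "real N * (1 - beta) * (Exc ?a (Suc N) i - Exc ?a (Suc N) i * (if js ! i = 0 then 1 else 0))
          \<le> real N * (1 - ?a i) * Exc ?a (Suc N) i"
      proof (cases "js ! i = 0")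
        case True then show ?thesis using lam0 by simp
      next
        case False
        have "js ! i < D" using lists_on_nth[OF js i] by simp
        then have "?a i \<le> beta" using lamb False by auto
        then have "real N * (1 - beta) \<le> real N * (1 - ?a i)" by (intro mult_left_mono) auto
        then show ?thesis using False Exn[OF js, of i] by (simp add: mult_right_mono)
      qed
      then show ?thesis unfolding g_def w d by (simp add: algebra_simps)
    qed
    have "(\<Sum>i<Suc N. g (permute_list (t i) js)) \<le> (\<Sum>i<Suc N. (real N * (1 - ?a i) + 1) * Exc ?a (Suc N) i - 1)"
      using gt by (intro sum_mono) auto
    also have "\<dots> = real (Suc N) * ((\<Sum>i<Suc N. Exc ?a (Suc N) i) - (real (Suc N) - 1) * (\<Prod>k<Suc N. ?a k) - 1)"
    proof -
      have "(\<Sum>i<Suc N. (real N * (1 - ?a i) + 1) * Exc ?a (Suc N) i - 1)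
          = real (Suc N) * (\<Sum>i<Suc N. Exc ?a (Suc N) i) - real N * (\<Sum>i<Suc N. ?a i * Exc ?a (Suc N) i) - real (Suc N)"
      proof -
        have e1: "(real N * (1 - ?a i) + 1) * Exc ?a (Suc N) i - 1 = (real (Suc N) * Exc ?a (Suc N) i - real N * (?a i * Exc ?a (Suc N) i)) - 1" for i
          by (simp add: algebra_simps)
        show ?thesis unfolding e1 sum_subtractf sum_distrib_left[symmetric] by simp
      qed
      moreover have "(\<Sum>i<Suc N. ?a i * Exc ?a (Suc N) i) = real (Suc N) * (\<Prod>k<Suc N. ?a k)"
        using Ssum[of js] by simp
      ultimately show ?thesis by (simp only:) (simp add: algebra_simps)
    qed
    also have "\<dots> \<le> 0"
    proof -
      have "(\<Sum>i<Suc N. Exc ?a (Suc N) i) - (real (Suc N) - 1) * (\<Prod>k<Suc N. ?a k) \<le> 1"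
        using a01[OF js] by (intro ineq1) auto
      then show ?thesis by (simp add: mult_le_0_iff)
    qed
    finally show "(\<Sum>i<Suc N. g (permute_list (Transposition.transpose i N) js)) \<le> 0" unfolding t_def .
  qed
  then show "real N * (1 - beta) * (p - f) + p \<le> 1" using sumg by simp
  assume bh: "beta \<le> 1/2"
  define g2 where "g2 js = (real N + 1) * (wp js - wp js * ind js) - 1" for js
  have sumg2: "(\<Sum>js\<in>?L. q js * g2 js) = (real N + 1) * (p - f) - 1"
    unfolding g2_def p_def f_def wp_def ind_def
    by (simp add: algebra_simps sum.distrib sum_subtractf sum_distrib_left[symmetric] qs)
  have "(\<Sum>js\<in>?L. q js * g2 js) \<le> 0"
  proof (rule sym_bound[OF qp qn], intro ballI)
    fix js assume js: "js \<in> ?L"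
    let ?a = "\<lambda>k. lam (js ! k)"
    let ?b = "\<lambda>k. js ! k \<noteq> 0"
    have gt: "g2 (permute_list (t i) js) = (real N + 1) * (if ?b i then Exc ?a (Suc N) i else 0) - 1" if i: "i < Suc N" for i
    proof -
      have w: "wp (permute_list (t i) js) = Exc ?a (Suc N) i"
        unfolding wp_def t_def by (rule wp_transpose[OF lenL[OF js] i])
      have d: "ind (permute_list (t i) js) = (if js ! i = 0 then 1 else 0)"
        unfolding ind_def t_def using last_transpose[OF lenL[OF js] i] by simp
      show ?thesis unfolding g2_def w d by simp
    qed
    have "(\<Sum>i<Suc N. g2 (permute_list (t i) js)) = (\<Sum>i<Suc N. (real N + 1) * (if ?b i then Exc ?a (Suc N) i else 0) - 1)"
      using gt by (intro sum.cong) auto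
    also have "\<dots> = (real N + 1) * ((\<Sum>i<Suc N. if ?b i then Exc ?a (Suc N) i else 0) - 1)"
      by (subst sum_subtractf, subst sum_distrib_left[symmetric]) (simp add: right_diff_distrib)
    also have "\<dots> \<le> 0"
    proof -
      have hb: "\<forall>k<Suc N. (?b k \<longrightarrow> 0 \<le> ?a k \<and> ?a k \<le> 1/2) \<and> (\<not> ?b k \<longrightarrow> ?a k = 1)"
      proof (intro allI impI conjI)
        fix k assume k: "k < Suc N"
        have "js ! k < D" using lists_on_nth[OF js k] by simp
        then have lk: "0 \<le> ?a k \<and> ?a k \<le> beta" if "?b k" using lamb that by simp
        show "?b k \<Longrightarrow> 0 \<le> ?a k" using lk by simp
        show "?b k \<Longrightarrow> ?a k \<le> 1/2" using lk bh by fastforce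
        show "\<not> ?b k \<Longrightarrow> ?a k = 1" using lam0 by simp
      qed
      then have "(\<Sum>i<Suc N. if ?b i then Exc ?a (Suc N) i else 0) \<le> 1" using ineq2[OF hb] by simp
      then show ?thesis by (simp add: mult_le_0_iff)
    qed
    finally show "(\<Sum>i<Suc N. g2 (permute_list (Transposition.transpose i N) js)) \<le> 0" unfolding t_def .
  qed
  then show "(real N + 1) * (p - f) \<le> 1" using sumg2 by simp
qed



definition prodv :: "nat \<Rightarrow> (nat \<Rightarrow> 'b \<Rightarrow> complex) \<Rightarrow> 'b list \<Rightarrow> complex" where
  "prodv n w xs = (\<Prod>k<n. w k (xs ! k))"

lemma sum_idx_prod:
  fixes f :: "nat \<Rightarrow> 'b::finite \<Rightarrow> 'd::comm_semiring_1"
  shows "(\<Sum>xs\<in>idx n. \<Prod>k<n. f k (xs ! k)) = (\<Prod>k<n. \<Sum>a\<in>UNIV. f k a)"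
  unfolding idx_lists_on by (rule prod_sum_lists[symmetric]) simp

lemma prodv_norm:
  fixes w :: "nat \<Rightarrow> 'b::finite \<Rightarrow> complex"
  shows "(\<Sum>xs\<in>idx n. prodv n w xs * cnj (prodv n w xs)) = (\<Prod>k<n. ip (w k) (w k))"
proof -
  have "(\<Sum>xs\<in>idx n. prodv n w xs * cnj (prodv n w xs)) = (\<Sum>xs\<in>idx n. \<Prod>k<n. w k (xs ! k) * cnj (w k (xs ! k)))"
    unfolding prodv_def by (simp add: prod.distrib cnj_prod)
  also have "\<dots> = (\<Prod>k<n. \<Sum>a\<in>UNIV. w k a * cnj (w k a))" by (rule sum_idx_prod)
  also have "\<dots> = (\<Prod>k<n. ip (w k) (w k))" unfolding ip_def by (simp add: mult.commute)
  finally show ?thesis .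
qed

lemma tr_prodv:
  fixes w :: "nat \<Rightarrow> 'b::finite \<Rightarrow> complex" and As :: "'b op list"
  assumes len: "length As = n"
  shows "tr_prod n (tensor_ops As) (\<lambda>xs ys. prodv n w xs * cnj (prodv n w ys)) =
         Re (\<Prod>k<n. ip (w k) (mat_vec (As ! k) (w k)))"
proof -
  define F where "F k a b = (As ! k) a b * (w k b * cnj (w k a))" for k a b
  have "(\<Sum>xs\<in>idx n. \<Sum>ys\<in>idx n. tensor_ops As xs ys * (prodv n w ys * cnj (prodv n w xs)))
      = (\<Sum>xs\<in>idx n. \<Sum>ys\<in>idx n. \<Prod>k<n. F k (xs ! k) (ys ! k))"
    unfolding tensor_ops_def prodv_def F_def len by (simp add: prod.distrib cnj_prod)
  also have "\<dots> = (\<Sum>xs\<in>idx n. \<Prod>k<n. \<Sum>b\<in>UNIV. F k (xs ! k) b)"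
    by (rule sum.cong[OF refl], rule sum_idx_prod)
  also have "\<dots> = (\<Prod>k<n. \<Sum>a\<in>UNIV. \<Sum>b\<in>UNIV. F k a b)"
    by (rule sum_idx_prod)
  also have "\<dots> = (\<Prod>k<n. ip (w k) (mat_vec (As ! k) (w k)))"
    unfolding ip_def mat_vec_def F_def by (simp add: sum_distrib_left mult_ac)
  finally show ?thesis unfolding tr_prod_def by (simp add: mult_ac)
qed

lemma tr_sum:
  "tr_prod n A (\<lambda>xs ys. \<Sum>l\<in>S. of_real (c l) * R l xs ys) = (\<Sum>l\<in>S. c l * tr_prod n A (R l))"
proof -
  have "(\<Sum>xs\<in>idx n. \<Sum>ys\<in>idx n. A xs ys * (\<Sum>l\<in>S. of_real (c l) * R l ys xs))
      = (\<Sum>xs\<in>idx n. \<Sum>ys\<in>idx n. \<Sum>l\<in>S. of_real (c l) * (A xs ys * R l ys xs))"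
    by (simp add: sum_distrib_left mult_ac)
  also have "\<dots> = (\<Sum>xs\<in>idx n. \<Sum>l\<in>S. \<Sum>ys\<in>idx n. of_real (c l) * (A xs ys * R l ys xs))"
    by (rule sum.cong[OF refl], rule sum.swap)
  also have "\<dots> = (\<Sum>l\<in>S. \<Sum>xs\<in>idx n. \<Sum>ys\<in>idx n. of_real (c l) * (A xs ys * R l ys xs))"
    by (rule sum.swap)
  also have "\<dots> = (\<Sum>l\<in>S. of_real (c l) * (\<Sum>xs\<in>idx n. \<Sum>ys\<in>idx n. A xs ys * R l ys xs))"
    by (simp add: sum_distrib_left)
  finally show ?thesis unfolding tr_prod_def by (simp add: Re_sum)
qed

lemma tr_mix:
  "tr_prod n A (\<lambda>xs ys. of_real a * R1 xs ys + of_real b * R2 xs ys) = a * tr_prod n A R1 + b * tr_prod n A R2"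
  unfolding tr_prod_def
  by (simp add: algebra_simps sum.distrib sum_distrib_left)

lemma psd_rank1sum:
  fixes F :: "'l \<Rightarrow> 'b \<Rightarrow> complex" and I :: "'b set"
  assumes "\<forall>l\<in>S. 0 \<le> c l"
  shows "psd_on I (\<lambda>xs ys. \<Sum>l\<in>S. of_real (c l) * (F l xs * cnj (F l ys)))"
  unfolding psd_on_def
proof (intro conjI allI ballI)
  fix i j
  show "(\<Sum>l\<in>S. of_real (c l) * (F l j * cnj (F l i))) = cnj (\<Sum>l\<in>S. of_real (c l) * (F l i * cnj (F l j)))"
    by (simp add: cnj_sum mult_ac)
next
  fix v :: "'b \<Rightarrow> complex"
  define z where "z l = (\<Sum>i\<in>I. cnj (v i) * F l i)" for l
  have "(\<Sum>i\<in>I. \<Sum>j\<in>I. cnj (v i) * (\<Sum>l\<in>S. of_real (c l) * (F l i * cnj (F l j))) * v j)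
      = (\<Sum>i\<in>I. \<Sum>j\<in>I. \<Sum>l\<in>S. of_real (c l) * ((cnj (v i) * F l i) * cnj (cnj (v j) * F l j)))"
    by (simp add: sum_distrib_left sum_distrib_right mult_ac)
  also have "\<dots> = (\<Sum>i\<in>I. \<Sum>l\<in>S. \<Sum>j\<in>I. of_real (c l) * ((cnj (v i) * F l i) * cnj (cnj (v j) * F l j)))"
    by (rule sum.cong[OF refl], rule sum.swap)
  also have "\<dots> = (\<Sum>l\<in>S. \<Sum>i\<in>I. \<Sum>j\<in>I. of_real (c l) * ((cnj (v i) * F l i) * cnj (cnj (v j) * F l j)))"
    by (rule sum.swap)
  also have "\<dots> = (\<Sum>l\<in>S. of_real (c l) * (z l * cnj (z l)))"
    unfolding z_def by (simp add: sum_distrib_left sum_distrib_right cnj_sum mult_ac)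
  also have "\<dots> = of_real (\<Sum>l\<in>S. c l * (cmod (z l))\<^sup>2)"
    unfolding of_real_sum by (rule sum.cong[OF refl]) (simp add: complex_norm_square[symmetric] flip: of_real_power)
  finally have eq: "(\<Sum>i\<in>I. \<Sum>j\<in>I. cnj (v i) * (\<Sum>l\<in>S. of_real (c l) * (F l i * cnj (F l j))) * v j)
      = of_real (\<Sum>l\<in>S. c l * (cmod (z l))\<^sup>2)" .
  have "0 \<le> (\<Sum>l\<in>S. c l * (cmod (z l))\<^sup>2)" using assms by (intro sum_nonneg) auto
  then show "0 \<le> Re (\<Sum>i\<in>I. \<Sum>j\<in>I. cnj (v i) * (\<Sum>l\<in>S. of_real (c l) * (F l i * cnj (F l j))) * v j)"
    unfolding eq by simp
qed

lemma psd_mix: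
  fixes R1 R2 :: "'b \<Rightarrow> 'b \<Rightarrow> complex"
  assumes "psd_on I R1" "psd_on I R2" "0 \<le> a" "0 \<le> b"
  shows "psd_on I (\<lambda>xs ys. of_real a * R1 xs ys + of_real b * R2 xs ys)"
  unfolding psd_on_def
proof (intro conjI allI ballI)
  fix i j assume "i \<in> I" "j \<in> I"
  then have "R1 j i = cnj (R1 i j)" "R2 j i = cnj (R2 i j)" using assms unfolding psd_on_def by blast+
  then show "of_real a * R1 j i + of_real b * R2 j i = cnj (of_real a * R1 i j + of_real b * R2 i j)" by simp
next
  fix v :: "'b \<Rightarrow> complex"
  have h1: "0 \<le> Re (\<Sum>i\<in>I. \<Sum>j\<in>I. cnj (v i) * R1 i j * v j)" using assms(1) unfolding psd_on_def by blast
  have h2: "0 \<le> Re (\<Sum>i\<in>I. \<Sum>j\<in>I. cnj (v i) * R2 i j * v j)" using assms(2) unfolding psd_on_def by blast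
  have "(\<Sum>i\<in>I. \<Sum>j\<in>I. cnj (v i) * (of_real a * R1 i j + of_real b * R2 i j) * v j)
     = of_real a * (\<Sum>i\<in>I. \<Sum>j\<in>I. cnj (v i) * R1 i j * v j) + of_real b * (\<Sum>i\<in>I. \<Sum>j\<in>I. cnj (v i) * R2 i j * v j)"
    by (simp add: algebra_simps sum.distrib sum_distrib_left)
  then show "0 \<le> Re (\<Sum>i\<in>I. \<Sum>j\<in>I. cnj (v i) * (of_real a * R1 i j + of_real b * R2 i j) * v j)"
    using h1 h2 assms(3,4) by simp
qed


definition wv :: "('b \<Rightarrow> complex) \<Rightarrow> ('b \<Rightarrow> complex) \<Rightarrow> nat \<Rightarrow> nat \<Rightarrow> 'b \<Rightarrow> complex" where
  "wv psi v l k = (if k = l then v else psi)"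

definition rhoS :: "('b \<Rightarrow> complex) \<Rightarrow> ('b \<Rightarrow> complex) \<Rightarrow> nat \<Rightarrow> 'b list op" where
  "rhoS psi v n = (\<lambda>xs ys. \<Sum>l<n. of_real (1 / real n) * (prodv n (wv psi v l) xs * cnj (prodv n (wv psi v l) ys)))"

lemma rhoS_density:
  fixes psi v :: "'b::finite \<Rightarrow> complex"
  assumes "ip psi psi = 1" "ip v v = 1" "n \<ge> 1"
  shows "density_op n (rhoS psi v n)"
  unfolding density_op_def
proof
  show "psd_on (idx n) (rhoS psi v n)" unfolding rhoS_def by (rule psd_rank1sum) simp
  have "(\<Sum>xs\<in>idx n. rhoS psi v n xs xs) = (\<Sum>l<n. \<Sum>xs\<in>idx n. of_real (1 / real n) * (prodv n (wv psi v l) xs * cnj (prodv n (wv psi v l) xs)))"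
    unfolding rhoS_def by (rule sum.swap)
  also have "\<dots> = (\<Sum>l<n. of_real (1 / real n) * (\<Prod>k<n. ip (wv psi v l k) (wv psi v l k)))"
    by (simp add: sum_divide_distrib[symmetric] prodv_norm)
  also have "\<dots> = (\<Sum>l<n. of_real (1 / real n))"
  proof -
    have "ip (wv psi v l k) (wv psi v l k) = 1" for l k using assms by (simp add: wv_def)
    then show ?thesis by simp
  qed
  also have "\<dots> = 1" using assms by simp
  finally show "(\<Sum>xs\<in>idx n. rhoS psi v n xs xs) = 1" .
qed

lemma prodv_perm:
  assumes s: "s permutes {..<n}" and len: "length xs = n"
  shows "prodv n (wv psi v l) (permute_list s xs) = prodv n (wv psi v (s l)) xs"
proof -
  have "prodv n (wv psi v l) (permute_list s xs) = (\<Prod>k<n. wv psi v l k (xs ! s k))"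
    unfolding prodv_def using s len by (intro prod.cong refl) (simp add: permute_list_nth)
  also have "\<dots> = (\<Prod>k<n. wv psi v (s l) (s k) (xs ! s k))"
    using permutes_inj[OF s] by (intro prod.cong refl) (auto simp: wv_def inj_eq)
  also have "\<dots> = prod ((\<lambda>m. wv psi v (s l) m (xs ! m)) \<circ> s) {..<n}" by (simp add: comp_def)
  also have "\<dots> = prodv n (wv psi v (s l)) xs" unfolding prodv_def by (rule prod.permute[OF s, symmetric])
  finally show ?thesis .
qed

lemma rhoS_perm:
  fixes psi v :: "'b::finite \<Rightarrow> complex"
  shows "perm_invariant n (rhoS psi v n)"
  unfolding perm_invariant_def
proof (intro allI impI ballI)
  fix s and xs ys :: "'b list" assume s: "s permutes {..<n}" and xs: "xs \<in> idx n" and ys: "ys \<in> idx n"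
  define h where "h l = of_real (1 / real n) * (prodv n (wv psi v l) xs * cnj (prodv n (wv psi v l) ys))" for l
  have "rhoS psi v n (permute_list s xs) (permute_list s ys) = (\<Sum>l<n. h (s l))"
    unfolding rhoS_def h_def using xs ys s by (simp add: prodv_perm idx_def)
  also have "\<dots> = sum (h \<circ> s) {..<n}" by (simp add: comp_def)
  also have "\<dots> = sum h {..<n}" by (rule sum.permute[OF s, symmetric])
  finally show "rhoS psi v n (permute_list s xs) (permute_list s ys) = rhoS psi v n xs ys"
    unfolding rhoS_def h_def .
qed

lemma rhoS_tr:
  fixes As :: "'b::finite op list"
  assumes "length As = n"
  shows "tr_prod n (tensor_ops As) (rhoS psi v n) =
    (\<Sum>l<n. (1 / real n) * Re (\<Prod>k<n. ip (wv psi v l k) (mat_vec (As ! k) (wv psi v l k))))"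
  unfolding rhoS_def tr_sum tr_prodv[OF assms] ..

lemma mat_vec_id: "mat_vec id_op w = w"
proof
  fix i
  have eq: "(\<lambda>j. id_op i j * w j) = (\<lambda>j. if j = i then w j else 0)" by (auto simp: id_op_def)
  show "mat_vec id_op w i = w i" unfolding mat_vec_def eq by simp
qed

lemma mat_vec_proj: "mat_vec (proj_op psi) w = (\<lambda>a. psi a * ip psi w)"
  unfolding mat_vec_def proj_op_def ip_def by (simp add: sum_distrib_left mult_ac)

lemma prod_if_one:
  fixes m :: "'c::comm_monoid_mult" and N l :: nat
  shows "(\<Prod>k<N. if k = l then m else 1) = (if l < N then m else 1)"
proof (cases "l < N")
  case True
  then have "(\<Prod>k<N. if k = l then m else 1) = (if l = l then m else 1) * (\<Prod>k\<in>{..<N} - {l}. if k = l then m else 1)"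
    by (subst prod.remove[of _ l]) auto
  then show ?thesis using True by simp
next
  case False then show ?thesis by (intro trans[OF prod.neutral]) auto
qed

lemma sum_if_last:
  fixes a x y :: real
  shows "(\<Sum>l<Suc N. a * (if l < N then x else y)) = a * (real N * x + y)"
proof -
  have "(\<Sum>l<N. a * (if l < N then x else y)) = (\<Sum>l<N. a * x)" by (rule sum.cong) auto
  then show ?thesis by (simp add: algebra_simps)
qed

lemma rhoS_pf:
  fixes psi v :: "'b::finite \<Rightarrow> complex" and Om :: "'b op"
  assumes pn: "ip psi psi = 1" and vn: "ip v v = 1"
    and pe: "mat_vec Om psi = psi" and ve: "mat_vec Om v = (\<lambda>a. of_real mu * v a)"
  shows "p_rho N Om (rhoS psi v (Suc N)) = (real N * mu + 1) / (real N + 1)"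
    and "f_rho N Om psi (rhoS psi v (Suc N)) = (real N * mu + (cmod (ip psi v))\<^sup>2) / (real N + 1)"
proof -
  have omk: "ip (wv psi v l k) (mat_vec Om (wv psi v l k)) = (if k = l then of_real mu else 1)" for l k
    using pn vn pe ve by (simp add: wv_def ip_scale_r)
  have nth1: "(replicate N Om @ [B]) ! k = (if k < N then Om else B)" if "k < Suc N" for k B
    using that by (auto simp: nth_append less_Suc_eq)
  have gen: "(\<Prod>k<Suc N. ip (wv psi v l k) (mat_vec ((replicate N Om @ [B]) ! k) (wv psi v l k)))
      = (if l < N then of_real mu else 1) * ip (wv psi v l N) (mat_vec B (wv psi v l N))" for l B
  proof -
    have "(\<Prod>k<Suc N. ip (wv psi v l k) (mat_vec ((replicate N Om @ [B]) ! k) (wv psi v l k)))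
       = (\<Prod>k<N. ip (wv psi v l k) (mat_vec Om (wv psi v l k))) * ip (wv psi v l N) (mat_vec B (wv psi v l N))"
      by (simp add: nth1 nth_append)
    also have "(\<Prod>k<N. ip (wv psi v l k) (mat_vec Om (wv psi v l k))) = (\<Prod>k<N. if k = l then of_real mu else 1)"
      by (simp add: omk)
    finally show ?thesis by (simp add: prod_if_one)
  qed
  have lenp: "length (replicate N Om @ [id_op]) = Suc N" by simp
  have "p_rho N Om (rhoS psi v (Suc N)) =
      (\<Sum>l<Suc N. (1 / real (Suc N)) * Re ((if l < N then of_real mu else 1) * ip (wv psi v l N) (mat_vec id_op (wv psi v l N))))"
    unfolding p_rho_def Suc_eq_plus1[symmetric] rhoS_tr[OF lenp] gen ..
  also have "\<dots> = (\<Sum>l<Suc N. (1 / real (Suc N)) * (if l < N then mu else 1))"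
    using pn vn by (intro sum.cong refl) (auto simp: mat_vec_id wv_def)
  also have "\<dots> = (real N * mu + 1) / (real N + 1)"
    unfolding sum_if_last by (simp add: field_simps)
  finally show "p_rho N Om (rhoS psi v (Suc N)) = (real N * mu + 1) / (real N + 1)" .
  have lenf: "length (replicate N Om @ [proj_op psi]) = Suc N" by simp
  have pv: "ip v psi * ip psi v = of_real ((cmod (ip psi v))\<^sup>2)"
    using ip_cnj[of v psi] by (simp add: complex_norm_square[symmetric] mult.commute flip: of_real_power)
  have "f_rho N Om psi (rhoS psi v (Suc N)) =
      (\<Sum>l<Suc N. (1 / real (Suc N)) * Re ((if l < N then of_real mu else 1) * ip (wv psi v l N) (mat_vec (proj_op psi) (wv psi v l N))))"
    unfolding f_rho_def Suc_eq_plus1[symmetric] rhoS_tr[OF lenf] gen ..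
  also have "\<dots> = (\<Sum>l<Suc N. (1 / real (Suc N)) * (if l < N then mu else (cmod (ip psi v))\<^sup>2))"
  proof (intro sum.cong refl)
    fix l assume "l \<in> {..<Suc N}"
    then have "l < N \<or> l = N" by auto
    then show "(1 / real (Suc N)) * Re ((if l < N then of_real mu else 1) * ip (wv psi v l N) (mat_vec (proj_op psi) (wv psi v l N)))
        = (1 / real (Suc N)) * (if l < N then mu else (cmod (ip psi v))\<^sup>2)"
    proof
      assume "l < N" then show ?thesis using pn by (simp add: wv_def mat_vec_proj ip_scale_r)
    next
      assume "l = N"
      have "ip v (\<lambda>a. psi a * ip psi v) = ip v psi * ip psi v"
        unfolding ip_def by (simp add: sum_distrib_right mult_ac)
      then show ?thesis using pv \<open>l = N\<close> by (simp add: wv_def mat_vec_proj)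
    qed
  qed
  also have "\<dots> = (real N * mu + (cmod (ip psi v))\<^sup>2) / (real N + 1)"
    unfolding sum_if_last by (simp add: field_simps)
  finally show "f_rho N Om psi (rhoS psi v (Suc N)) = (real N * mu + (cmod (ip psi v))\<^sup>2) / (real N + 1)" .
qed



definition mixst :: "real \<Rightarrow> 'b list op \<Rightarrow> 'b list op \<Rightarrow> 'b list op" where
  "mixst t r1 r2 = (\<lambda>xs ys. of_real t * r1 xs ys + of_real (1 - t) * r2 xs ys)"

lemma mix_density:
  assumes "density_op n r1" "density_op n r2" "0 \<le> t" "t \<le> 1"
  shows "density_op n (mixst t r1 r2)"
  unfolding density_op_def
proof
  show "psd_on (idx n) (mixst t r1 r2)" unfolding mixst_def
    using assms by (intro psd_mix) (auto simp: density_op_def)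
  have "(\<Sum>xs\<in>idx n. mixst t r1 r2 xs xs) = of_real t * (\<Sum>xs\<in>idx n. r1 xs xs) + of_real (1 - t) * (\<Sum>xs\<in>idx n. r2 xs xs)"
    unfolding mixst_def by (simp add: sum.distrib sum_distrib_left)
  also have "\<dots> = 1" using assms unfolding density_op_def by (simp add: algebra_simps)
  finally show "(\<Sum>xs\<in>idx n. mixst t r1 r2 xs xs) = 1" .
qed

lemma mix_perm:
  assumes "perm_invariant n r1" "perm_invariant n r2"
  shows "perm_invariant n (mixst t r1 r2)"
  using assms unfolding perm_invariant_def mixst_def by simp

lemma mix_p: "p_rho N Om (mixst t r1 r2) = t * p_rho N Om r1 + (1 - t) * p_rho N Om r2"
  unfolding p_rho_def mixst_def by (rule tr_mix)

lemma mix_f: "f_rho N Om psi (mixst t r1 r2) = t * f_rho N Om psi r1 + (1 - t) * f_rho N Om psi r2"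
  unfolding f_rho_def mixst_def by (rule tr_mix)

lemma ratio1:
  fixes d p f K :: real
  assumes "0 < d" "d \<le> p" "0 < K" "K * (p - f) + p \<le> 1"
  shows "1 - (1 - d) / (K * d) \<le> f / p"
proof -
  have pp: "0 < p" using assms by simp
  have "K * d * (p - f) \<le> d * (1 - p)" using assms(1,4) mult_left_mono[of "K * (p - f)" "1 - p" d]
    by (simp add: algebra_simps)
  also have "\<dots> \<le> (1 - d) * p" using assms(2) by (simp add: algebra_simps)
  finally have h: "K * d * (p - f) \<le> (1 - d) * p" .
  have Kd: "0 < K * d" using assms by simp
  have "p - f \<le> ((1 - d) * p) / (K * d)" using h Kd by (simp add: pos_le_divide_eq mult.commute)
  then have "(p - f) / p \<le> (1 - d) / (K * d)" using pp by (simp add: pos_divide_le_eq)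
  moreover have "f / p = 1 - (p - f) / p" using pp by (simp add: diff_divide_distrib)
  ultimately show ?thesis by simp
qed

lemma ratio2:
  fixes d p f K :: real
  assumes "0 < d" "d \<le> p" "0 < K" "K * (p - f) \<le> 1"
  shows "1 - 1 / (K * d) \<le> f / p"
proof -
  have pp: "0 < p" using assms by simp
  have "K * d * (p - f) \<le> d" using assms(1,4) mult_left_mono[of "K * (p - f)" 1 d]
    by (simp add: algebra_simps)
  also have "\<dots> \<le> p" using assms(2) .
  finally have h: "K * d * (p - f) \<le> p" .
  have Kd: "0 < K * d" using assms by simp
  have "p - f \<le> p / (K * d)" using h Kd by (simp add: pos_le_divide_eq mult.commute)
  then have "(p - f) / p \<le> 1 / (K * d)" using pp by (simp add: pos_divide_le_eq)
  moreover have "f / p = 1 - (p - f) / p" using pp by (simp add: diff_divide_distrib)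
  ultimately show ?thesis by simp
qed


lemma nth_rep_app: "k < Suc N \<Longrightarrow> (replicate N A @ [B]) ! k = (if k < N then A else B)"
  by (auto simp: nth_append less_Suc_eq)

lemma prod_if_lt: "(\<Prod>k<Suc N. if k < N then g k else (1::real)) = (\<Prod>k<N. g k)"
  by simp

lemma lower_bounds:
  fixes Om :: "'a::finite op" and psi :: "'a \<Rightarrow> complex" and rho :: "'a list op"
  assumes pn: "ip psi psi = 1" and vo: "verification_op Om psi"
    and sl: "second_largest_eigenvalue Om beta" and b1: "beta < 1"
    and rho: "density_op (Suc N) rho" and pi: "perm_invariant (Suc N) rho"
  shows "real N * (1 - beta) * (p_rho N Om rho - f_rho N Om psi rho) + p_rho N Om rho \<le> 1"
    and "beta \<le> 1/2 \<Longrightarrow> (real N + 1) * (p_rho N Om rho - f_rho N Om psi rho) \<le> 1"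
proof -
  let ?D = "CARD('a)"
  have psdO: "psd_on UNIV Om" and pe: "mat_vec Om psi = psi"
    and nd: "\<forall>v. mat_vec Om v = v \<longrightarrow> (\<exists>c. v = (\<lambda>i. c * psi i))"
    using vo unfolding verification_op_def by auto
  have herm: "herm Om" by (rule psd_herm[OF psdO])
  obtain u l where ul: "orthonormal u ?D" "u 0 = psi" "l 0 = 1"
    "\<forall>i<?D. mat_vec Om (u i) = (\<lambda>a. of_real (l i) * u i a)"
    using spectral[OF herm pn pe] by blast
  have D0: "0 < ?D" by simp
  have comp: "(\<Sum>i<?D. cnj (u i x) * u i y) = (if y = x then 1 else 0)" for x y
    by (rule completeness[OF ul(1)])
  have idexp: "\<forall>x y. (id_op :: 'a op) x y = (\<Sum>j<?D. of_real 1 * u j x * cnj (u j y))"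
  proof (intro allI)
    fix x y :: 'a
    have "(\<Sum>j<?D. of_real 1 * u j x * cnj (u j y)) = (\<Sum>j<?D. cnj (u j y) * u j x)"
      by (simp add: mult.commute)
    also have "\<dots> = id_op x y" unfolding comp id_op_def by auto
    finally show "id_op x y = (\<Sum>j<?D. of_real 1 * u j x * cnj (u j y))" ..
  qed
  have omexp: "\<forall>x y. Om x y = (\<Sum>j<?D. of_real (l j) * u j x * cnj (u j y))"
  proof (intro allI)
    fix x y :: 'a
    have "(\<Sum>j<?D. of_real (l j) * u j x * cnj (u j y)) = (\<Sum>j<?D. mat_vec Om (u j) x * cnj (u j y))"
      using ul(4) by (intro sum.cong refl) simp
    also have "\<dots> = (\<Sum>j<?D. \<Sum>z\<in>UNIV. Om x z * (u j z * cnj (u j y)))"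
      unfolding mat_vec_def sum_distrib_right by (simp add: mult_ac)
    also have "\<dots> = (\<Sum>z\<in>UNIV. \<Sum>j<?D. Om x z * (u j z * cnj (u j y)))"
      by (rule sum.swap)
    also have "\<dots> = (\<Sum>z\<in>UNIV. Om x z * id_op z y)"
      using idexp by (simp add: sum_distrib_left)
    also have "\<dots> = Om x y"
    proof -
      have eq: "(\<lambda>z. Om x z * id_op z y) = (\<lambda>z. if z = y then Om x z else 0)" by (auto simp: id_op_def)
      show ?thesis unfolding eq by simp
    qed
    finally show "Om x y = (\<Sum>j<?D. of_real (l j) * u j x * cnj (u j y))" ..
  qed
  have projexp: "\<forall>x y. proj_op psi x y = (\<Sum>j<?D. of_real (if j = 0 then 1 else 0) * u j x * cnj (u j y))"
  proof (intro allI)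
    fix x y :: 'a
    have "(\<Sum>j<?D. of_real (if j = 0 then 1 else 0) * u j x * cnj (u j y)) = (\<Sum>j<?D. if j = 0 then u j x * cnj (u j y) else 0)"
      by (intro sum.cong refl) simp
    also have "\<dots> = u 0 x * cnj (u 0 y)" using D0 by simp
    finally show "proj_op psi x y = (\<Sum>j<?D. of_real (if j = 0 then 1 else 0) * u j x * cnj (u j y))"
      unfolding proj_op_def ul(2) ..
  qed
  have lamb: "\<forall>j<?D. j \<noteq> 0 \<longrightarrow> 0 \<le> l j \<and> l j \<le> beta"
  proof (intro allI impI)
    fix j assume j: "j < ?D" "j \<noteq> 0"
    have uu: "ip (u j) (u j) = 1" and u0: "ip (u 0) (u j) = 0"
      using ul(1) j unfolding orthonormal_def by auto
    have ev: "mat_vec Om (u j) = (\<lambda>a. of_real (l j) * u j a)" using ul(4) j by simp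
    have "ip (u j) (mat_vec Om (u j)) = of_real (l j)" unfolding ev ip_scale_r uu by simp
    then have l0: "0 \<le> l j" using psd_ip[OF psdO, of "u j"] by simp
    have ne: "u j \<noteq> (\<lambda>_. 0)" using uu by (auto simp: ip_def)
    have l1: "l j \<noteq> 1"
    proof
      assume "l j = 1"
      then have "mat_vec Om (u j) = u j" using ev by simp
      then obtain c where c: "u j = (\<lambda>i. c * psi i)" using nd by blast
      have "ip psi (u j) = c" unfolding c ip_scale_r pn by simp
      then have "c = 0" using u0 ul(2) by simp
      then show False using ne c by simp
    qed
    have "is_eigenvalue Om (of_real (l j))"
      unfolding is_eigenvalue_def using ne ev by blast
    then have "l j \<le> beta" using sl l1 unfolding second_largest_eigenvalue_def by blast
    then show "0 \<le> l j \<and> l j \<le> beta" using l0 by simp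
  qed
  let ?L = "lists_on {..<?D} (Suc N)"
  let ?q = "qq u (Suc N) rho"
  have pexp: "p_rho N Om rho = (\<Sum>js\<in>?L. ?q js * (\<Prod>k<N. l (js ! k)))"
  proof -
    have "p_rho N Om rho = (\<Sum>js\<in>?L. (\<Prod>k<Suc N. (\<lambda>k j. if k < N then l j else 1) k (js ! k)) * ?q js)"
      unfolding p_rho_def Suc_eq_plus1[symmetric]
    proof (rule tr_expand)
      show "length (replicate N Om @ [id_op]) = Suc N" by simp
      show "\<forall>k<Suc N. \<forall>x y. ((replicate N Om @ [id_op]) ! k) x y = (\<Sum>j<?D. of_real ((\<lambda>k j. if k < N then l j else 1) k j) * u j x * cnj (u j y))"
        using omexp idexp by (simp add: nth_rep_app)
    qed
    then show ?thesis by (simp add: mult.commute)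
  qed
  have fexp: "f_rho N Om psi rho = (\<Sum>js\<in>?L. ?q js * ((\<Prod>k<N. l (js ! k)) * (if js ! N = 0 then 1 else 0)))"
  proof -
    have "f_rho N Om psi rho = (\<Sum>js\<in>?L. (\<Prod>k<Suc N. (\<lambda>k j. if k < N then l j else if j = 0 then 1 else 0) k (js ! k)) * ?q js)"
      unfolding f_rho_def Suc_eq_plus1[symmetric]
    proof (rule tr_expand)
      show "length (replicate N Om @ [proj_op psi]) = Suc N" by simp
      show "\<forall>k<Suc N. \<forall>x y. ((replicate N Om @ [proj_op psi]) ! k) x y = (\<Sum>j<?D. of_real ((\<lambda>k j. if k < N then l j else if j = 0 then 1 else 0) k j) * u j x * cnj (u j y))"
        using omexp projexp by (simp add: nth_rep_app)
    qed
    then show ?thesis by (simp add: mult.commute)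
  qed
  have qp: "\<forall>s js. s permutes {..<Suc N} \<longrightarrow> js \<in> ?L \<longrightarrow> ?q (permute_list s js) = ?q js"
    using qq_perm[OF pi] unfolding lists_on_def by blast
  have qn: "\<forall>js\<in>?L. 0 \<le> ?q js" using qq_nonneg[OF rho] by blast
  have qs: "(\<Sum>js\<in>?L. ?q js) = 1" by (rule qq_sum[OF rho idexp])
  note cm = comb_main[OF qp qn qs ul(3) lamb b1]
  show "real N * (1 - beta) * (p_rho N Om rho - f_rho N Om psi rho) + p_rho N Om rho \<le> 1"
    unfolding pexp fexp by (rule cm(1))
  show "beta \<le> 1/2 \<Longrightarrow> (real N + 1) * (p_rho N Om rho - f_rho N Om psi rho) \<le> 1"
    unfolding pexp fexp by (rule cm(2))
qed


lemma unit_eigvec: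
  fixes Om :: "'a::finite op" and psi :: "'a \<Rightarrow> complex"
  assumes herm: "herm Om" and pe: "mat_vec Om psi = psi"
    and ev: "is_eigenvalue Om (complex_of_real m)" and m1: "m \<noteq> 1"
  shows "\<exists>v. ip v v = 1 \<and> ip psi v = 0 \<and> mat_vec Om v = (\<lambda>a. of_real m * v a)"
proof -
  obtain v where v: "v \<noteq> (\<lambda>_. 0)" "mat_vec Om v = (\<lambda>i. of_real m * v i)"
    using ev unfolding is_eigenvalue_def by blast
  define c where "c = (of_real (1 / sqrt (\<Sum>a\<in>UNIV. (cmod (v a))\<^sup>2)) :: complex)"
  define w where "w = (\<lambda>a. c * v a)"
  have "ip w w = of_real (\<Sum>a\<in>UNIV. (cmod (w a))\<^sup>2)" by (rule ip_self)
  also have "(\<Sum>a\<in>UNIV. (cmod (w a))\<^sup>2) = 1" unfolding w_def c_def by (rule normalize_vec(2)[OF v(1)])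
  finally have wn: "ip w w = 1" by simp
  have we: "mat_vec Om w = (\<lambda>a. of_real m * w a)" unfolding w_def mat_vec_scale v(2) by (simp add: mult_ac)
  have "ip psi (mat_vec Om w) = ip psi w" using ip_herm[OF herm, of psi w] pe by simp
  then have "of_real m * ip psi w = ip psi w" unfolding we ip_scale_r .
  then have "(of_real m - 1) * ip psi w = 0" by (simp add: algebra_simps)
  moreover have "(of_real m - 1 :: complex) \<noteq> 0" using m1 by simp
  ultimately have "ip psi w = 0" by simp
  then show ?thesis using wn we by blast
qed

lemma F_min_ge:
  fixes S :: "real set"
  assumes "S \<noteq> {}" "\<forall>x\<in>S. B \<le> x"
  shows "B \<le> Inf S"
  using assms by (intro cInf_greatest) auto

lemma F_min_eq:
  assumes "x \<in> S" "x = B" "\<forall>x\<in>S. B \<le> (x::real)"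
  shows "Inf S = B"
proof (rule antisym)
  have "bdd_below S" using assms(3) by (auto simp: bdd_below_def)
  then show "Inf S \<le> B" using assms(1,2) by (intro cInf_lower2[of x]) auto
  show "B \<le> Inf S" using assms by (intro F_min_ge) auto
qed


theorem theorem5:
  fixes Om :: "'a::finite op" and psi :: "'a \<Rightarrow> complex"
    and beta :: real and N :: nat and delta :: real
  assumes "CARD('a) \<ge> 2"
    and "unit_vec psi"
    and "verification_op Om psi"
    and "second_largest_eigenvalue Om beta"
    and "N \<ge> 1"
    and "0 < delta" and "delta \<le> 1"
    and "0 < 1 - beta" and "1 - beta \<le> 1"
  shows "F_min N delta Om psi \<ge> 1 - (1 - delta) / (real N * (1 - beta) * delta)
    \<and> ((1 + real N * beta) / (real N + 1) \<le> delta \<longrightarrow>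
         F_min N delta Om psi = 1 - (1 - delta) / (real N * (1 - beta) * delta))
    \<and> (1 - beta \<ge> 1/2 \<longrightarrow>
         F_min N delta Om psi \<ge> 1 - 1 / ((real N + 1) * delta)
         \<and> (is_eigenvalue Om 0 \<and> 1 / (real N + 1) \<le> delta
              \<and> delta \<le> (1 + real N * beta) / (real N + 1) \<longrightarrow>
              F_min N delta Om psi = 1 - 1 / ((real N + 1) * delta)))"
proof -
  note uv = assms(2) and vo = assms(3) and sl = assms(4) and N1 = assms(5)
    and d0 = assms(6) and d1 = assms(7)
  have b1: "beta < 1" and b0: "0 \<le> beta" using assms(8,9) by auto
  have pn: "ip psi psi = 1" using uv ip_self[of psi] unfolding unit_vec_def by simp
  have psdO: "psd_on UNIV Om" and pe: "mat_vec Om psi = psi"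
    using vo unfolding verification_op_def by auto
  have herm: "herm Om" by (rule psd_herm[OF psdO])
  define S where "S = {f_rho N Om psi rho / p_rho N Om rho | rho.
      density_op (N+1) rho \<and> perm_invariant (N+1) rho \<and> p_rho N Om rho \<ge> delta}"
  have FS: "F_min N delta Om psi = Inf S" unfolding F_min_def S_def ..
  have memS: "f_rho N Om psi rho / p_rho N Om rho \<in> S"
    if "density_op (Suc N) rho" "perm_invariant (Suc N) rho" "p_rho N Om rho \<ge> delta" for rho
    unfolding S_def using that by auto
  define B1 where "B1 = 1 - (1 - delta) / (real N * (1 - beta) * delta)"
  define B2 where "B2 = 1 - 1 / ((real N + 1) * delta)"
  define ds where "ds = (1 + real N * beta) / (real N + 1)"
  have Npos: "0 < real N" using N1 by simp
  have LB1: "\<forall>x\<in>S. B1 \<le> x"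
  proof
    fix x assume "x \<in> S"
    then obtain rho where r: "x = f_rho N Om psi rho / p_rho N Om rho" "density_op (Suc N) rho"
      "perm_invariant (Suc N) rho" "p_rho N Om rho \<ge> delta" unfolding S_def by auto
    have "real N * (1 - beta) * (p_rho N Om rho - f_rho N Om psi rho) + p_rho N Om rho \<le> 1"
      by (rule lower_bounds(1)[OF pn vo sl b1 r(2) r(3)])
    then show "B1 \<le> x" unfolding r(1) B1_def using d0 r(4) Npos b1
      by (intro ratio1) auto
  qed
  have LB2: "\<forall>x\<in>S. B2 \<le> x" if bh: "beta \<le> 1/2"
  proof
    fix x assume "x \<in> S"
    then obtain rho where r: "x = f_rho N Om psi rho / p_rho N Om rho" "density_op (Suc N) rho"
      "perm_invariant (Suc N) rho" "p_rho N Om rho \<ge> delta" unfolding S_def by auto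
    have "(real N + 1) * (p_rho N Om rho - f_rho N Om psi rho) \<le> 1"
      by (rule lower_bounds(2)[OF pn vo sl b1 r(2) r(3) bh])
    then show "B2 \<le> x" unfolding r(1) B2_def using d0 r(4)
      by (intro ratio2) auto
  qed
  define r0 where "r0 = rhoS psi psi (Suc N)"
  have r0d: "density_op (Suc N) r0" unfolding r0_def by (rule rhoS_density[OF pn pn]) simp
  have r0p: "perm_invariant (Suc N) r0" unfolding r0_def by (rule rhoS_perm)
  have p0: "p_rho N Om r0 = 1" unfolding r0_def using rhoS_pf(1)[OF pn pn pe, of 1 N] pe by simp
  have f0: "f_rho N Om psi r0 = 1" unfolding r0_def using rhoS_pf(2)[OF pn pn pe, of 1 N] pe pn by simp
  have neS: "S \<noteq> {}" using memS[OF r0d r0p] p0 d1 by auto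
  have G1: "B1 \<le> Inf S" by (rule F_min_ge[OF neS LB1])
  have evb: "is_eigenvalue Om (complex_of_real beta)" "beta \<noteq> 1"
    using sl unfolding second_largest_eigenvalue_def by auto
  obtain vb where vb: "ip vb vb = 1" "ip psi vb = 0" "mat_vec Om vb = (\<lambda>a. of_real beta * vb a)"
    using unit_eigvec[OF herm pe evb] by blast
  define rb where "rb = rhoS psi vb (Suc N)"
  have rbd: "density_op (Suc N) rb" unfolding rb_def by (rule rhoS_density[OF pn vb(1)]) simp
  have rbp: "perm_invariant (Suc N) rb" unfolding rb_def by (rule rhoS_perm)
  have pb: "p_rho N Om rb = ds" unfolding rb_def ds_def using rhoS_pf(1)[OF pn vb(1) pe vb(3), of N] by (simp add: add.commute)
  have fb: "f_rho N Om psi rb = real N * beta / (real N + 1)" unfolding rb_def using rhoS_pf(2)[OF pn vb(1) pe vb(3), of N] vb(2) by simp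
  have ds1: "ds < 1" unfolding ds_def using b1 Npos by (simp add: field_simps)
  have S1: "ds \<le> delta \<longrightarrow> Inf S = B1"
  proof
    assume dd: "ds \<le> delta"
    define t where "t = (delta - ds) / (1 - ds)"
    have t0: "0 \<le> t" "t \<le> 1" unfolding t_def using dd ds1 d1 by (auto simp: field_simps)
    define rr where "rr = mixst t r0 rb"
    have prr: "p_rho N Om rr = delta"
    proof -
      have "p_rho N Om rr = ds + t * (1 - ds)" unfolding rr_def mix_p p0 pb by (simp add: algebra_simps)
      also have "t * (1 - ds) = delta - ds" unfolding t_def using ds1 by simp
      finally show ?thesis by simp
    qed
    have dsb: "ds - real N * beta / (real N + 1) = 1 / (real N + 1)" unfolding ds_def by (simp add: field_simps)
    have e1: "p_rho N Om rr - f_rho N Om psi rr = (1 - t) * (1 / (real N + 1))"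
      unfolding rr_def mix_p mix_f p0 f0 pb fb dsb[symmetric] by (simp add: algebra_simps)
    have e2: "1 - t = (1 - delta) / (1 - ds)" unfolding t_def using ds1 by (simp add: field_simps)
    have e3: "1 - ds = real N * (1 - beta) / (real N + 1)" unfolding ds_def by (simp add: field_simps)
    have pf: "p_rho N Om rr - f_rho N Om psi rr = (1 - delta) / (real N * (1 - beta))"
    proof -
      have a0: "real N * (1 - beta) \<noteq> 0" "real N + 1 \<noteq> 0" using Npos b1 by auto
      have "(1 - delta) / (real N * (1 - beta) / (real N + 1)) * (1 / (real N + 1))
          = (1 - delta) * (real N + 1) / (real N * (1 - beta)) / (real N + 1)"
        by simp
      also have "\<dots> = (1 - delta) / (real N * (1 - beta))" using a0 by simp
      finally show ?thesis unfolding e1 e2 e3 .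
    qed
    have "f_rho N Om psi rr / p_rho N Om rr = B1"
    proof -
      have fe: "f_rho N Om psi rr = delta - (1 - delta) / (real N * (1 - beta))" using pf prr by simp
      show ?thesis unfolding prr B1_def fe diff_divide_distrib divide_divide_eq_left using d0 by simp
    qed
    moreover have "f_rho N Om psi rr / p_rho N Om rr \<in> S"
      using memS[of rr] prr unfolding rr_def
      using mix_density[OF r0d rbd t0] mix_perm[OF r0p rbp] by simp
    ultimately show "Inf S = B1" using F_min_eq LB1 by metis
  qed
  have S2: "beta \<le> 1/2 \<longrightarrow> B2 \<le> Inf S \<and> (is_eigenvalue Om 0 \<and> 1 / (real N + 1) \<le> delta \<and> delta \<le> ds \<longrightarrow> Inf S = B2)"
  proof (intro impI conjI)
    assume bh: "beta \<le> 1/2"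
    show "B2 \<le> Inf S" by (rule F_min_ge[OF neS LB2[OF bh]])
    assume hh: "is_eigenvalue Om 0 \<and> 1 / (real N + 1) \<le> delta \<and> delta \<le> ds"
    have ev0: "is_eigenvalue Om (complex_of_real 0)" using hh by simp
    obtain vz where vz: "ip vz vz = 1" "ip psi vz = 0" "mat_vec Om vz = (\<lambda>a. of_real 0 * vz a)"
      using unit_eigvec[OF herm pe ev0] by auto
    define rz where "rz = rhoS psi vz (Suc N)"
    have rzd: "density_op (Suc N) rz" unfolding rz_def by (rule rhoS_density[OF pn vz(1)]) simp
    have rzp: "perm_invariant (Suc N) rz" unfolding rz_def by (rule rhoS_perm)
    have pz: "p_rho N Om rz = 1 / (real N + 1)" unfolding rz_def using rhoS_pf(1)[OF pn vz(1) pe vz(3), of N] by simp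
    have fz: "f_rho N Om psi rz = 0" unfolding rz_def using rhoS_pf(2)[OF pn vz(1) pe vz(3), of N] vz(2) by simp
    define t where "t = (if beta = 0 then 1 else (delta - 1 / (real N + 1)) / (ds - 1 / (real N + 1)))"
    have dsm: "ds - 1 / (real N + 1) = real N * beta / (real N + 1)" unfolding ds_def diff_divide_distrib[symmetric] by simp
    have t0: "0 \<le> t" "t \<le> 1"
    proof -
      show "0 \<le> t"
      proof (cases "beta = 0")
        case False
        then have "0 < ds - 1 / (real N + 1)" unfolding dsm using b0 Npos by simp
        then show ?thesis unfolding t_def using False hh by simp
      qed (simp add: t_def)
      show "t \<le> 1"
      proof (cases "beta = 0")
        case False
        then have "0 < ds - 1 / (real N + 1)" unfolding dsm using b0 Npos by simp
        then show ?thesis unfolding t_def using False hh by simp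
      qed (simp add: t_def)
    qed
    define rr where "rr = mixst t rb rz"
    have prr: "p_rho N Om rr = delta"
    proof (cases "beta = 0")
      case True
      then have "ds = 1 / (real N + 1)" unfolding ds_def by simp
      then have "delta = ds" using hh by simp
      then show ?thesis unfolding rr_def mix_p pb pz t_def using True by simp
    next
      case False
      then have ne: "ds - 1 / (real N + 1) \<noteq> 0" unfolding dsm using b0 Npos by simp
      have gen: "t * ds + (1 - t) * c = c + t * (ds - c)" for c :: real by (simp add: algebra_simps)
      have "p_rho N Om rr = 1 / (real N + 1) + t * (ds - 1 / (real N + 1))"
        unfolding rr_def mix_p pb pz by (rule gen)
      also have "\<dots> = delta" unfolding t_def using False ne by simp
      finally show ?thesis .
    qed
    have gen2: "t * c + (1 - t) * c = c" for c :: real by (simp add: algebra_simps)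
    have pf: "p_rho N Om rr - f_rho N Om psi rr = 1 / (real N + 1)"
    proof -
      have "p_rho N Om rr - f_rho N Om psi rr = t * (ds - real N * beta / (real N + 1)) + (1 - t) * (1 / (real N + 1))"
        unfolding rr_def mix_p mix_f pb pz fb fz by (simp add: algebra_simps)
      also have "ds - real N * beta / (real N + 1) = 1 / (real N + 1)" unfolding ds_def by (simp add: field_simps)
      also have "t * (1 / (real N + 1)) + (1 - t) * (1 / (real N + 1)) = 1 / (real N + 1)"
        by (rule gen2)
      finally show ?thesis .
    qed
    have "f_rho N Om psi rr / p_rho N Om rr = B2"
    proof -
      have fe: "f_rho N Om psi rr = delta - 1 / (real N + 1)" using pf prr by simp
      show ?thesis unfolding prr B2_def fe diff_divide_distrib divide_divide_eq_left using d0 by simp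
    qed
    moreover have "f_rho N Om psi rr / p_rho N Om rr \<in> S"
      using memS[of rr] prr unfolding rr_def
      using mix_density[OF rbd rzd t0] mix_perm[OF rbp rzp] by simp
    ultimately show "Inf S = B2" using F_min_eq LB2[OF bh] by metis
  qed
  have bh_iff: "(1 - beta \<ge> 1/2) = (beta \<le> 1/2)" by auto
  show ?thesis unfolding FS bh_iff
    using G1 S1 S2 unfolding B1_def B2_def ds_def by blast
qed


end
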